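(* Let $\mathbb X,\mathbb Y$ be Euclidean spaces, $g\colon\mathbb X\to\mathbb Y$ twice continuously differentiable, $D\subset\mathbb Y$ closed, $\Phi(x):=g(x)-D$, $(\bar x,0)\in\operatorname{gph}\Phi$ and $u\in\mathbb S_{\mathbb X}$. Then $\Phi$ is strongly asymptotically regular at $(\bar x,0)$ in direction $u$ if FOSCMS$(u)$ holds, or if $\mathbb Y=\mathbb R^m$, $D$ is locally polyhedral around $g(\bar x)$, and SOSCMS$(u)$ holds.
   Context: FOSCMS$(u)$: for all $y^*$, [$\nabla g(\bar x)^*y^*=0$, $y^*\in\mathcal N_D(g(\bar x);\nabla g(\bar x)u)$] implies $y^*=0$. SOSCMS$(u)$: for all $y^*$, [$\nabla g(\bar x)^*y^*=0$, $\nabla^2\langle y^*,g\rangle(\bar x)[u,u]\ge0$, $y^*\in\mathcal N_D(g(\bar x);\nabla g(\bar x)u)$] implies $y^*=0$, where $\nabla^2\langle y^*,g\rangle(\bar x)$ is the Hessian of $x\mapsto\langle y^*,g(x)\rangle$. $\mathcal N_Q(z;w)$ is the directional limiting normal cone: all $\eta$ with $w_k\to w$, $t_k\downarrow0$, $\eta_k\to\eta$, $\eta_k\in\widehat{\mathcal N}_Q(z+t_kw_k)$ ($\widehat{\mathcal N}$ regular normal cone). Strong asymptotic regularity in direction $u$ at $(\bar x,0)$: for all $(x_k,y_k)\in\operatorname{gph}\Phi$, $x_k^*$, $\lambda_k$, $x^*$, $y^*$ with $x_k\notin\Phi^{-1}(0)$, $y_k\ne0$, $x_k^*\in\widehat D^*\Phi(x_k,y_k)(\lambda_k)$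 (i.e. $(x_k^*,-\lambda_k)\in\widehat{\mathcal N}_{\operatorname{gph}\Phi}(x_k,y_k)$) and $x_k\to\bar x$, $y_k\to0$, $x_k^*\to x^*$, $\frac{x_k-\bar x}{\|x_k-\bar x\|}\to u$, $\frac{y_k}{\|x_k-\bar x\|}\to0$, $\frac{\|y_k\|}{\|x_k-\bar x\|}\lambda_k\to y^*$, $\|\lambda_k\|\to\infty$, $\frac{y_k}{\|y_k\|}-\frac{\lambda_k}{\|\lambda_k\|}\to0$, there is $\lambda$ with $(x^*,-\lambda)\in\mathcal N_{\operatorname{gph}\Phi}((\bar x,0);(u,0))$. Locally polyhedral: intersection with a box around $g(\bar x)$ is a finite union of convex polyhedra. *)

theory Defs
  imports "HOL-Analysis.Analysis"
begin

definition gph :: "('a \<Rightarrow> 'b set) \<Rightarrow> ('a \<times> 'b) set" where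
  "gph \<Phi> = {(x, y). y \<in> \<Phi> x}"

definition reg_normal :: "'a::real_inner set \<Rightarrow> 'a \<Rightarrow> 'a set" where
  "reg_normal Q z = {\<eta>. z \<in> Q \<and>
     (\<forall>\<epsilon>>0. \<exists>\<delta>>0. \<forall>z'\<in>Q. norm (z' - z) < \<delta> \<longrightarrow> \<eta> \<bullet> (z' - z) \<le> \<epsilon> * norm (z' - z))}"

definition dir_lim_normal :: "'a::real_inner set \<Rightarrow> 'a \<Rightarrow> 'a \<Rightarrow> 'a set" where
  "dir_lim_normal Q z w = {\<eta>. \<exists>(t::nat \<Rightarrow> real) wk \<eta>k.
     (\<forall>k. t k > 0) \<and> t \<longlonglongrightarrow> 0 \<and> wk \<longlonglongrightarrow> w \<and> \<eta>k \<longlonglongrightarrow> \<eta> \<and>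
     (\<forall>k. \<eta>k k \<in> reg_normal Q (z + t k *\<^sub>R wk k))}"

definition reg_coderiv :: "('a::real_inner \<Rightarrow> 'b::real_inner set) \<Rightarrow> 'a \<Rightarrow> 'b \<Rightarrow> 'b \<Rightarrow> 'a set" where
  "reg_coderiv \<Phi> x y l = {xs. (xs, - l) \<in> reg_normal (gph \<Phi>) (x, y)}"

definition strongly_asymp_regular_dir ::
  "('a::real_inner \<Rightarrow> 'b::real_inner set) \<Rightarrow> 'a \<Rightarrow> 'a \<Rightarrow> bool" where
  "strongly_asymp_regular_dir \<Phi> xbar u \<longleftrightarrow>
    (\<forall>(x::nat \<Rightarrow> 'a) (y::nat \<Rightarrow> 'b) (xs::nat \<Rightarrow> 'a) (lam::nat \<Rightarrow> 'b) xstar ystar.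
      (\<forall>k. (x k, y k) \<in> gph \<Phi>) \<and>
      (\<forall>k. 0 \<notin> \<Phi> (x k)) \<and> (\<forall>k. y k \<noteq> 0) \<and>
      (\<forall>k. xs k \<in> reg_coderiv \<Phi> (x k) (y k) (lam k)) \<and>
      x \<longlonglongrightarrow> xbar \<and> y \<longlonglongrightarrow> 0 \<and> xs \<longlonglongrightarrow> xstar \<and>
      (\<lambda>k. (1 / norm (x k - xbar)) *\<^sub>R (x k - xbar)) \<longlonglongrightarrow> u \<and>
      (\<lambda>k. (1 / norm (x k - xbar)) *\<^sub>R y k) \<longlonglongrightarrow> 0 \<and>
      (\<lambda>k. (norm (y k) / norm (x k - xbar)) *\<^sub>R lam k) \<longlonglongrightarrow> ystar \<and>
      filterlim (\<lambda>k. norm (lam k)) at_top sequentially \<and>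
      (\<lambda>k. (1 / norm (y k)) *\<^sub>R y k - (1 / norm (lam k)) *\<^sub>R lam k) \<longlonglongrightarrow> 0
      \<longrightarrow> (\<exists>l. (xstar, - l) \<in> dir_lim_normal (gph \<Phi>) (xbar, 0) (u, 0)))"

text \<open>FOSCMS(u), with g' xbar the derivative of g at xbar.\<close>
definition FOSCMS ::
  "('a::euclidean_space \<Rightarrow> 'b::euclidean_space) \<Rightarrow> ('a \<Rightarrow> 'a \<Rightarrow>\<^sub>L 'b) \<Rightarrow> 'b set \<Rightarrow> 'a \<Rightarrow> 'a \<Rightarrow> bool" where
  "FOSCMS g g' D xbar u \<longleftrightarrow>
    (\<forall>ys. adjoint (blinfun_apply (g' xbar)) ys = 0 \<and>
          ys \<in> dir_lim_normal D (g xbar) (g' xbar u) \<longrightarrow> ys = 0)"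

text \<open>SOSCMS(u); the Hessian of x |-> <y*, g x> at xbar applied to [u,u] is
  <y*, g''(xbar) u u>, where g'' is the second derivative of g.\<close>
definition SOSCMS ::
  "('a::euclidean_space \<Rightarrow> 'b::euclidean_space) \<Rightarrow> ('a \<Rightarrow> 'a \<Rightarrow>\<^sub>L 'b) \<Rightarrow> ('a \<Rightarrow> 'a \<Rightarrow>\<^sub>L 'a \<Rightarrow>\<^sub>L 'b)
     \<Rightarrow> 'b set \<Rightarrow> 'a \<Rightarrow> 'a \<Rightarrow> bool" where
  "SOSCMS g g' g'' D xbar u \<longleftrightarrow>
    (\<forall>ys. adjoint (blinfun_apply (g' xbar)) ys = 0 \<and>
          ys \<bullet> (g'' xbar u u) \<ge> 0 \<and>
          ys \<in> dir_lim_normal D (g xbar) (g' xbar u) \<longrightarrow> ys = 0)"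

definition locally_polyhedral :: "'b::euclidean_space set \<Rightarrow> 'b \<Rightarrow> bool" where
  "locally_polyhedral D z \<longleftrightarrow>
    (\<exists>r>0. \<exists>F. finite F \<and> (\<forall>P\<in>F. polyhedron P) \<and>
       D \<inter> cbox (z - r *\<^sub>R One) (z + r *\<^sub>R One) = \<Union>F)"

end

theory Submission
  imports Defs
begin

lemma gph_eq: fixes g :: "'a \<Rightarrow> 'b::ab_group_add" shows "gph (\<lambda>x. {g x - d | d. d \<in> D}) = {(x,y). g x - y \<in> D}"
proof -
  have "\<And>x y. (y \<in> {g x - d | d. d \<in> D}) = (g x - y \<in> D)"
  proof
    fix x y assume "y \<in> {g x - d | d. d \<in> D}" then show "g x - y \<in> D" by auto
  next
    fix x y assume "g x - y \<in> D" then show "y \<in> {g x - d | d. d \<in> D}"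
      by (intro CollectI exI[of _ "g x - y"]) simp
  qed
  then show ?thesis unfolding gph_def by auto
qed

lemma rn_zero: "z \<in> Q \<Longrightarrow> 0 \<in> reg_normal Q z"
  unfolding reg_normal_def by (auto intro!: exI[of _ 1])

lemma rn_mem: "\<eta> \<in> reg_normal Q z \<Longrightarrow> z \<in> Q"
  unfolding reg_normal_def by auto

lemma rn_scale:
  assumes "\<eta> \<in> reg_normal Q z" "c \<ge> 0"
  shows "c *\<^sub>R \<eta> \<in> reg_normal Q z"
proof (cases "c = 0")
  case True then show ?thesis using rn_zero rn_mem assms(1) by (metis scaleR_zero_left)
next
  case False
  then have c: "c > 0" using assms by auto
  show ?thesis unfolding reg_normal_def
  proof (intro CollectI conjI allI impI)
    show "z \<in> Q" using rn_mem assms by auto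
    fix e :: real assume "e > 0"
    then have "e / c > 0" using c by auto
    then obtain d where d: "d > 0" "\<forall>z'\<in>Q. norm (z' - z) < d \<longrightarrow> \<eta> \<bullet> (z' - z) \<le> (e/c) * norm (z' - z)"
      using assms(1) unfolding reg_normal_def by blast
    show "\<exists>d>0. \<forall>z'\<in>Q. norm (z' - z) < d \<longrightarrow> c *\<^sub>R \<eta> \<bullet> (z' - z) \<le> e * norm (z' - z)"
    proof (intro exI[of _ d] conjI ballI impI)
      fix z' assume "z' \<in> Q" "norm (z' - z) < d"
      then have "\<eta> \<bullet> (z' - z) \<le> (e/c) * norm (z' - z)" using d by auto
      then have "c * (\<eta> \<bullet> (z' - z)) \<le> c * ((e/c) * norm (z' - z))"
        using c by (simp add: mult_left_mono del: times_divide_eq_right)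
      then show "c *\<^sub>R \<eta> \<bullet> (z' - z) \<le> e * norm (z' - z)" using c by simp
    qed (use d in auto)
  qed
qed

lemma rn_mono:
  assumes "\<eta> \<in> reg_normal Q z" "P \<subseteq> Q" "z \<in> P"
  shows "\<eta> \<in> reg_normal P z"
  using assms unfolding reg_normal_def by blast

lemma rn_convex:
  assumes "convex P" "\<eta> \<in> reg_normal P z" "p \<in> P"
  shows "\<eta> \<bullet> (p - z) \<le> 0"
proof (rule ccontr)
  assume "\<not> ?thesis"
  then have a: "\<eta> \<bullet> (p - z) > 0" by simp
  then have pz: "p \<noteq> z" by auto
  then have np: "norm (p - z) > 0" by auto
  define e where "e = (\<eta> \<bullet> (p - z)) / (2 * norm (p - z))"
  have e: "e > 0" using a np by (simp add: e_def)
  have zP: "z \<in> P" using rn_mem assms by auto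
  obtain d where d: "d > 0" "\<forall>z'\<in>P. norm (z' - z) < d \<longrightarrow> \<eta> \<bullet> (z' - z) \<le> e * norm (z' - z)"
    using assms(2) e unfolding reg_normal_def by blast
  define s where "s = min 1 (d / (2 * norm (p - z)))"
  have s: "s > 0" "s \<le> 1" using d np by (auto simp: s_def)
  have "s * norm (p - z) \<le> (d / (2 * norm (p - z))) * norm (p - z)"
    by (rule mult_right_mono) (auto simp: s_def)
  also have "\<dots> = d/2" using np by simp
  finally have sd: "s * norm (p - z) < d" using d by auto
  have mem: "z + s *\<^sub>R (p - z) \<in> P"
  proof -
    have "z + s *\<^sub>R (p - z) = (1 - s) *\<^sub>R z + s *\<^sub>R p" by (simp add: algebra_simps)
    moreover have "(1 - s) *\<^sub>R z + s *\<^sub>R p \<in> P"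
      using assms(1) zP assms(3) s by (intro convexD) auto
    ultimately show ?thesis by simp
  qed
  have "\<eta> \<bullet> (z + s *\<^sub>R (p - z) - z) \<le> e * norm (z + s *\<^sub>R (p - z) - z)"
    using d(2) mem sd s by auto
  then have "s * (\<eta> \<bullet> (p - z)) \<le> e * (s * norm (p - z))" using s by simp
  also have "\<dots> = s * (\<eta> \<bullet> (p - z)) / 2" using np by (simp add: e_def field_simps)
  finally show False using s a by (simp add: field_simps)
qed

lemma gn_D:
  fixes g :: "'a::real_inner \<Rightarrow> 'b::real_inner"
  assumes "(xs, -l) \<in> reg_normal {(x,y). g x - y \<in> D} (x,y)"
  shows "l \<in> reg_normal D (g x - y)"
  unfolding reg_normal_def
proof (intro CollectI conjI allI impI)
  show "g x - y \<in> D" using rn_mem[OF assms] by auto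
  fix e :: real assume "e > 0"
  then obtain d where d: "d > 0" and
    H: "\<forall>z'\<in>{(x,y). g x - y \<in> D}. norm (z' - (x,y)) < d \<longrightarrow> (xs, -l) \<bullet> (z' - (x,y)) \<le> e * norm (z' - (x,y))"
    using assms unfolding reg_normal_def by blast
  show "\<exists>d>0. \<forall>z'\<in>D. norm (z' - (g x - y)) < d \<longrightarrow> l \<bullet> (z' - (g x - y)) \<le> e * norm (z' - (g x - y))"
  proof (intro exI[of _ d] conjI ballI impI)
    fix z' assume z': "z' \<in> D" "norm (z' - (g x - y)) < d"
    have eq: "(x, g x - z') - (x,y) = (0, - (z' - (g x - y)))" by simp
    have "norm ((x, g x - z') - (x,y)) = norm (z' - (g x - y))"
      unfolding eq by (simp only: norm_Pair1 norm_minus_cancel)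
    moreover have "(x, g x - z') \<in> {(x,y). g x - y \<in> D}" using z' by simp
    ultimately have "(xs, -l) \<bullet> ((x, g x - z') - (x,y)) \<le> e * norm (z' - (g x - y))"
      using H z' by metis
    then show "l \<bullet> (z' - (g x - y)) \<le> e * norm (z' - (g x - y))"
      unfolding eq by (simp add: inner_diff_right)
  qed (use d in auto)
qed

lemma gn_adj:
  fixes g :: "'a::euclidean_space \<Rightarrow> 'b::euclidean_space" and G :: "'a \<Rightarrow>\<^sub>L 'b"
  assumes nrm: "(xs, -l) \<in> reg_normal {(x,y). g x - y \<in> D} (x,y)"
    and der: "(g has_derivative blinfun_apply G) (at x)"
  shows "xs = adjoint (blinfun_apply G) l"
proof (rule ccontr)
  define v where "v = xs - adjoint (blinfun_apply G) l"
  assume "xs \<noteq> adjoint (blinfun_apply G) l"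
  then have nv: "norm v > 0" by (simp add: v_def)
  define K where "K = norm G"
  have K0: "K \<ge> 0" by (simp add: K_def)
  define \<theta> where "\<theta> = min 1 (norm v / (2 * (2 + K + norm l)))"
  have th: "\<theta> > 0" "\<theta> \<le> 1" "\<theta> * (2 + K + norm l) \<le> norm v / 2"
  proof -
    have pos: "0 < 2 + K + norm l" using K0 by (smt (verit) norm_ge_zero)
    then show "\<theta> > 0" "\<theta> \<le> 1" using nv by (auto simp: \<theta>_def)
    have "\<theta> * (2 + K + norm l) \<le> (norm v / (2 * (2 + K + norm l))) * (2 + K + norm l)"
      using K0 by (intro mult_right_mono) (auto simp: \<theta>_def)
    also have "\<dots> = norm v / 2" using pos by (simp add: field_simps)
    finally show "\<theta> * (2 + K + norm l) \<le> norm v / 2" .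
  qed
  obtain dn where dn: "dn > 0" and
    H: "\<forall>z'\<in>{(x,y). g x - y \<in> D}. norm (z' - (x,y)) < dn \<longrightarrow> (xs, -l) \<bullet> (z' - (x,y)) \<le> \<theta> * norm (z' - (x,y))"
    using nrm th unfolding reg_normal_def by blast
  have lin: "linear (blinfun_apply G)" by (simp add: blinfun.bounded_linear_right bounded_linear.linear)
  obtain dd where dd: "dd > 0" and
    Hd: "\<forall>y. norm (y - x) < dd \<longrightarrow> norm (g y - g x - blinfun_apply G (y - x)) \<le> \<theta> * norm (y - x)"
    using der th unfolding has_derivative_at_alt by blast
  define \<tau> where "\<tau> = min dn dd / (2 * norm v * (2 + K))"
  have tau: "\<tau> > 0" using dn dd nv K0 by (simp add: \<tau>_def)
  have tauv: "\<tau> * norm v * (2 + K) < min dn dd"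
  proof -
    have nz: "2 * norm v * (2 + K) \<noteq> 0" using nv K0 by auto
    have "\<tau> * (2 * norm v * (2 + K)) = min dn dd" using nz by (simp add: \<tau>_def)
    then have "\<tau> * norm v * (2 + K) = min dn dd / 2" by (simp add: algebra_simps)
    then show ?thesis using dn dd by linarith
  qed
  define x' where "x' = x + \<tau> *\<^sub>R v"
  define y' where "y' = y + (g x' - g x)"
  define e where "e = g x' - g x - blinfun_apply G (\<tau> *\<^sub>R v)"
  have nx: "norm (x' - x) = \<tau> * norm v" using tau by (simp add: x'_def)
  have "\<tau> * norm v \<le> \<tau> * norm v * (2 + K)" using tau nv K0 by (simp add: mult_le_cancel_left1 not_less)
  then have nxd: "norm (x' - x) < dd" using nx tauv by simp
  have ne: "norm e \<le> \<theta> * (\<tau> * norm v)"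
    using Hd nxd nx unfolding e_def by (metis add_diff_cancel_left' x'_def)
  have nG: "norm (blinfun_apply G (\<tau> *\<^sub>R v)) \<le> K * (\<tau> * norm v)"
    using norm_blinfun[of G "\<tau> *\<^sub>R v"] tau by (simp add: K_def)
  have ngx: "norm (g x' - g x) \<le> K * (\<tau> * norm v) + \<theta> * (\<tau> * norm v)"
  proof -
    have "g x' - g x = blinfun_apply G (\<tau> *\<^sub>R v) + e" by (simp add: e_def)
    then have "norm (g x' - g x) \<le> norm (blinfun_apply G (\<tau> *\<^sub>R v)) + norm e"
      by (metis norm_triangle_ineq)
    then show ?thesis using ne nG by linarith
  qed
  have diff: "(x', y') - (x, y) = (x' - x, g x' - g x)" by (simp add: y'_def)
  have N: "norm ((x', y') - (x, y)) \<le> \<tau> * norm v * (2 + K)"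
  proof -
    have "norm ((x', y') - (x, y)) \<le> norm (x' - x) + norm (g x' - g x)"
      unfolding diff by (rule norm_Pair_le)
    also have "\<dots> \<le> \<tau> * norm v + K * (\<tau> * norm v) + \<theta> * (\<tau> * norm v)" using nx ngx by simp
    also have "\<dots> \<le> \<tau> * norm v + K * (\<tau> * norm v) + 1 * (\<tau> * norm v)"
      using th tau nv by (intro add_left_mono mult_right_mono) auto
    also have "\<dots> = \<tau> * norm v * (2 + K)" by (simp add: algebra_simps)
    finally show ?thesis .
  qed
  have mem: "(x', y') \<in> {(x,y). g x - y \<in> D}"
    using rn_mem[OF nrm] by (simp add: y'_def)
  have ineq: "(xs, -l) \<bullet> ((x', y') - (x, y)) \<le> \<theta> * norm ((x', y') - (x, y))"
    using H mem N tauv by auto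
  have vv: "v \<bullet> v = xs \<bullet> v - v \<bullet> adjoint (blinfun_apply G) l"
  proof -
    have "v \<bullet> v = (xs - adjoint (blinfun_apply G) l) \<bullet> v" by (simp add: v_def)
    also have "\<dots> = xs \<bullet> v - v \<bullet> adjoint (blinfun_apply G) l" by (simp add: inner_diff_left inner_diff_right inner_commute)
    finally show ?thesis .
  qed
  have "(xs, -l) \<bullet> ((x', y') - (x, y)) = \<tau> * (xs \<bullet> v) - l \<bullet> (blinfun_apply G (\<tau> *\<^sub>R v)) - l \<bullet> e"
    unfolding diff by (simp add: x'_def e_def inner_diff_right inner_add_right)
  also have "l \<bullet> (blinfun_apply G (\<tau> *\<^sub>R v)) = \<tau> * (v \<bullet> adjoint (blinfun_apply G) l)"
    using adjoint_works[OF lin, of v l] by (simp add: blinfun.scaleR_right inner_commute)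
  finally have eq0: "(xs, -l) \<bullet> ((x', y') - (x, y)) = \<tau> * (xs \<bullet> v - v \<bullet> adjoint (blinfun_apply G) l) - l \<bullet> e"
    by (simp add: algebra_simps)
  then have eq: "(xs, -l) \<bullet> ((x', y') - (x, y)) = \<tau> * (norm v)^2 - l \<bullet> e"
    by (simp only: vv[symmetric] power2_norm_eq_inner)
  have "l \<bullet> e \<le> norm l * (\<theta> * (\<tau> * norm v))"
    using Cauchy_Schwarz_ineq2[of l e] ne by (smt (verit) mult_left_mono norm_ge_zero)
  then have "\<tau> * (norm v)^2 \<le> \<theta> * (\<tau> * norm v * (2 + K)) + norm l * (\<theta> * (\<tau> * norm v))"
    using ineq eq N th by (smt (verit, best) mult_left_mono)
  also have "\<dots> = (\<tau> * norm v) * (\<theta> * (2 + K + norm l))" by (simp add: algebra_simps)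
  also have "\<dots> \<le> (\<tau> * norm v) * (norm v / 2)"
    using th tau nv by (intro mult_left_mono) auto
  finally have "\<tau> * norm v * norm v \<le> \<tau> * norm v * (norm v / 2)" by (simp add: power2_eq_square algebra_simps)
  moreover have "\<tau> * norm v > 0" using tau nv by simp
  ultimately have "norm v \<le> norm v / 2" using mult_le_cancel_left_pos by blast
  then show False using nv by simp
qed


lemma gn_conv:
  fixes g :: "'a::euclidean_space \<Rightarrow> 'b::euclidean_space" and G :: "'a \<Rightarrow>\<^sub>L 'b"
  assumes l: "l \<in> reg_normal D (g x - y)"
    and der: "(g has_derivative blinfun_apply G) (at x)"
  shows "(adjoint (blinfun_apply G) l, -l) \<in> reg_normal {(x,y). g x - y \<in> D} (x,y)"
  unfolding reg_normal_def
proof (rule CollectI, intro conjI allI impI)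
  show "(x, y) \<in> {(x,y). g x - y \<in> D}" using rn_mem[OF l] by simp
  fix \<epsilon> :: real assume ep: "\<epsilon> > 0"
  define K where "K = norm G"
  have K0: "K \<ge> 0" by (simp add: K_def)
  have lin: "linear (blinfun_apply G)" by (simp add: blinfun.bounded_linear_right bounded_linear.linear)
  define e1 where "e1 = \<epsilon> / (2 * (K + 2))"
  have e1: "e1 > 0" "e1 * (K + 2) = \<epsilon> / 2" using ep K0 by (auto simp: e1_def field_simps)
  obtain d1 where d1: "d1 > 0" and
    H1: "\<forall>z'\<in>D. norm (z' - (g x - y)) < d1 \<longrightarrow> l \<bullet> (z' - (g x - y)) \<le> e1 * norm (z' - (g x - y))"
    using l e1 unfolding reg_normal_def by blast
  define e2 where "e2 = min 1 (\<epsilon> / (2 * (norm l + 1)))"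
  have nl1: "2 * (norm l + 1) > 0" "norm l + 1 > 0" by (smt (verit) norm_ge_zero)+
  have e2: "e2 > 0" "e2 \<le> 1" using ep nl1 by (auto simp: e2_def)
  have e2l: "norm l * e2 \<le> \<epsilon> / 2"
  proof -
    have "norm l * e2 \<le> norm l * (\<epsilon> / (2 * (norm l + 1)))"
      by (intro mult_left_mono) (auto simp: e2_def)
    also have "\<dots> \<le> (norm l + 1) * (\<epsilon> / (2 * (norm l + 1)))"
      using ep nl1 by (intro mult_right_mono) auto
    also have "\<dots> = \<epsilon> / 2" using nl1 by (simp add: field_simps)
    finally show ?thesis .
  qed
  obtain d2 where d2: "d2 > 0" and
    H2: "\<forall>x'. norm (x' - x) < d2 \<longrightarrow> norm (g x' - g x - blinfun_apply G (x' - x)) \<le> e2 * norm (x' - x)"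
    using der e2 unfolding has_derivative_at_alt by blast
  define \<delta> where "\<delta> = min d2 (d1 / (K + 2))"
  have dl: "\<delta> > 0" using d1 d2 K0 by (simp add: \<delta>_def)
  show "\<exists>d>0. \<forall>z'\<in>{(x,y). g x - y \<in> D}. norm (z' - (x,y)) < d \<longrightarrow>
      (adjoint (blinfun_apply G) l, -l) \<bullet> (z' - (x,y)) \<le> \<epsilon> * norm (z' - (x,y))"
  proof (intro exI[of _ \<delta>] conjI ballI impI)
    show "\<delta> > 0" by fact
    fix p assume pm: "p \<in> {(x,y). g x - y \<in> D}" and pn: "norm (p - (x,y)) < \<delta>"
    obtain x' y' where p: "p = (x', y')" by (cases p)
    define N where "N = norm (p - (x,y))"
    have dp: "p - (x,y) = (x' - x, y' - y)" by (simp add: p)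
    have nx: "norm (x' - x) \<le> N" unfolding N_def dp by (rule norm_fst_le)
    have ny: "norm (y' - y) \<le> N" unfolding N_def dp by (rule norm_snd_le)
    have N2: "N < d2" using pn by (simp add: N_def \<delta>_def)
    have N1: "N * (K + 2) < d1"
    proof -
      have "N < d1 / (K + 2)" using pn by (simp add: N_def \<delta>_def)
      then show ?thesis using K0 by (simp add: field_simps)
    qed
    define rem where "rem = g x' - g x - blinfun_apply G (x' - x)"
    have nr: "norm rem \<le> e2 * norm (x' - x)" using H2 nx N2 unfolding rem_def by auto
    have nr2: "norm rem \<le> e2 * N" using nr nx e2 mult_left_mono[of "norm (x' - x)" N e2] by linarith
    have nGx: "norm (blinfun_apply G (x' - x)) \<le> K * N"
      using norm_blinfun[of G "x' - x"] mult_left_mono[OF nx K0] by (simp add: K_def)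
    have dd: "(g x' - y') - (g x - y) = blinfun_apply G (x' - x) + rem - (y' - y)"
      by (simp add: rem_def)
    have ndd: "norm ((g x' - y') - (g x - y)) \<le> N * (K + 2)"
    proof -
      have "norm ((g x' - y') - (g x - y)) \<le> norm (blinfun_apply G (x' - x)) + norm rem + norm (y' - y)"
        unfolding dd using norm_triangle_ineq[of "blinfun_apply G (x' - x)" rem]
          norm_triangle_ineq4[of "blinfun_apply G (x' - x) + rem" "y' - y"] by linarith
      also have "\<dots> \<le> K * N + 1 * N + N" using nGx nr2 ny e2 mult_right_mono[of e2 1 N] N_def by auto
      finally show ?thesis by (simp add: algebra_simps)
    qed
    have gD: "g x' - y' \<in> D" using pm p by simp
    have A: "l \<bullet> ((g x' - y') - (g x - y)) \<le> e1 * (N * (K + 2))"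
    proof -
      have "l \<bullet> ((g x' - y') - (g x - y)) \<le> e1 * norm ((g x' - y') - (g x - y))"
        using H1 gD ndd N1 by auto
      also have "\<dots> \<le> e1 * (N * (K + 2))" using ndd e1 by (intro mult_left_mono) auto
      finally show ?thesis .
    qed
    have B: "- (l \<bullet> rem) \<le> norm l * (e2 * N)"
      using Cauchy_Schwarz_ineq2[of l rem] nr2 by (smt (verit) mult_left_mono norm_ge_zero)
    have "(adjoint (blinfun_apply G) l, -l) \<bullet> (p - (x,y)) = (x' - x) \<bullet> adjoint (blinfun_apply G) l - l \<bullet> (y' - y)"
      unfolding dp by (simp add: inner_commute)
    also have "\<dots> = l \<bullet> blinfun_apply G (x' - x) - l \<bullet> (y' - y)"
      using adjoint_works[OF lin, of "x' - x" l] by (simp add: inner_commute)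
    also have "\<dots> = l \<bullet> ((g x' - y') - (g x - y)) - l \<bullet> rem"
      unfolding dd by (simp add: inner_add_right inner_diff_right)
    also have "\<dots> \<le> e1 * (N * (K + 2)) + norm l * (e2 * N)" using A B by linarith
    also have "\<dots> = (e1 * (K + 2)) * N + (norm l * e2) * N" by (simp add: algebra_simps)
    also have "\<dots> \<le> (\<epsilon>/2) * N + (\<epsilon>/2) * N"
      using e1 e2l by (intro add_mono mult_right_mono) (auto simp: N_def)
    also have "\<dots> = \<epsilon> * norm (p - (x,y))" by (simp add: N_def)
    finally show "(adjoint (blinfun_apply G) l, -l) \<bullet> (p - (x,y)) \<le> \<epsilon> * norm (p - (x,y))" .
  qed
qed


lemma farkas:
  fixes G :: "'a::euclidean_space set"
  assumes "finite G"
  shows "{l. \<forall>v. (\<forall>a\<in>G. a \<bullet> v \<le> 0) \<longrightarrow> l \<bullet> v \<le> 0} = convex_cone hull G"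
proof
  show "convex_cone hull G \<subseteq> {l. \<forall>v. (\<forall>a\<in>G. a \<bullet> v \<le> 0) \<longrightarrow> l \<bullet> v \<le> 0}"
  proof (rule hull_minimal)
    show "G \<subseteq> {l. \<forall>v. (\<forall>a\<in>G. a \<bullet> v \<le> 0) \<longrightarrow> l \<bullet> v \<le> 0}" by auto
    show "convex_cone {l. \<forall>v. (\<forall>a\<in>G. a \<bullet> v \<le> 0) \<longrightarrow> l \<bullet> v \<le> 0}"
      unfolding convex_cone_def convex_def conic_def
      by (auto simp: inner_add_left intro!: add_nonpos_nonpos mult_nonneg_nonpos exI[of _ 0])
  qed
next
  show "{l. \<forall>v. (\<forall>a\<in>G. a \<bullet> v \<le> 0) \<longrightarrow> l \<bullet> v \<le> 0} \<subseteq> convex_cone hull G"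
  proof
    fix l assume l: "l \<in> {l. \<forall>v. (\<forall>a\<in>G. a \<bullet> v \<le> 0) \<longrightarrow> l \<bullet> v \<le> 0}"
    show "l \<in> convex_cone hull G"
    proof (rule ccontr)
      assume nl: "l \<notin> convex_cone hull G"
      have cl: "closed (convex_cone hull G)" using assms by (rule closed_convex_cone_hull)
      have cv: "convex (convex_cone hull G)" by (simp add: convex_convex_cone_hull)
      obtain a b where ab: "a \<bullet> l < b" "\<forall>x\<in>convex_cone hull G. a \<bullet> x > b"
        using separating_hyperplane_closed_point[OF cv cl nl] by blast
      have b0: "b < 0" using ab(2) convex_cone_hull_contains_0 by fastforce
      have pos: "a \<bullet> x \<ge> 0" if "x \<in> convex_cone hull G" for x
      proof (rule ccontr)
        assume "\<not> a \<bullet> x \<ge> 0"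
        then have neg: "a \<bullet> x < 0" by simp
        define t where "t = b / (a \<bullet> x)"
        have t: "t \<ge> 0" using b0 neg by (simp add: t_def divide_nonpos_neg)
        have "t *\<^sub>R x \<in> convex_cone hull G"
          using that t conic_convex_cone_hull conic_def by blast
        then have "a \<bullet> (t *\<^sub>R x) > b" using ab by blast
        moreover have "a \<bullet> (t *\<^sub>R x) = b" using neg by (simp add: t_def)
        ultimately show False by simp
      qed
      have "\<forall>g\<in>G. g \<bullet> (-a) \<le> 0"
        using pos hull_subset[of G convex_cone] by (auto simp: inner_commute)
      then have "l \<bullet> (-a) \<le> 0" using l by blast
      then have "(-a) \<bullet> l \<le> 0" by (simp add: inner_commute)
      then show False using ab b0 by simp
    qed
  qed
qed


lemma polycone_image_closed:
  fixes M :: "'a::euclidean_space set" and B :: "'a \<Rightarrow> 'c::euclidean_space"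
  assumes poly: "polyhedron M" and M0: "0 \<in> M"
    and conic: "\<And>x t. x \<in> M \<Longrightarrow> t \<ge> 0 \<Longrightarrow> t *\<^sub>R x \<in> M"
    and lin: "linear B" and mM: "\<And>k. m k \<in> M" and lim: "(\<lambda>k. B (m k)) \<longlonglongrightarrow> y"
  shows "y \<in> B ` M"
proof -
  have bl: "bounded_linear B" using lin linear_conv_bounded_linear by blast
  have clM: "closed M" using poly by (rule polyhedron_imp_closed)
  have cB: "continuous_on UNIV B" using bl by (rule linear_continuous_on)
  have "\<exists>\<mu>. \<mu> \<in> M \<and> B \<mu> = B (m k) \<and> (\<forall>z\<in>M. B z = B (m k) \<longrightarrow> norm \<mu> \<le> norm z)" for k
  proof -
    have cl: "closed (M \<inter> {x. B x = B (m k)})"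
      using clM cB by (intro closed_Int closed_Collect_eq) (auto intro: continuous_on_const)
    have ne: "M \<inter> {x. B x = B (m k)} \<noteq> {}" using mM by blast
    obtain x where "x \<in> M \<inter> {x. B x = B (m k)}" "\<And>z. z \<in> M \<inter> {x. B x = B (m k)} \<Longrightarrow> dist 0 x \<le> dist 0 z"
      using distance_attains_inf[OF cl ne, of 0] by blast
    then show ?thesis by (intro exI[of _ x]) (auto simp: dist_norm)
  qed
  then obtain \<mu> where \<mu>M: "\<And>k. \<mu> k \<in> M" and \<mu>B: "\<And>k. B (\<mu> k) = B (m k)"
    and \<mu>min: "\<And>k z. z \<in> M \<Longrightarrow> B z = B (m k) \<Longrightarrow> norm (\<mu> k) \<le> norm z"
    by metis
  define q where "q k = (1 / (1 + norm (\<mu> k))) *\<^sub>R \<mu> k" for k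
  have pos1: "1 + norm (\<mu> k) > 0" for k by (smt (verit) norm_ge_zero)
  have nq: "norm (q k) = norm (\<mu> k) / (1 + norm (\<mu> k))" for k
    using pos1[of k] by (simp add: q_def)
  have nq1: "norm (q k) < 1" for k using pos1[of k] by (simp add: nq)
  have rho: "1 - norm (q k) = 1 / (1 + norm (\<mu> k))" for k
    using pos1[of k] by (simp add: nq field_simps)
  have inv: "1 / (1 - norm (q k)) = 1 + norm (\<mu> k)" for k
    using pos1[of k] by (simp add: rho)
  have mu_eq: "\<mu> k = (1 / (1 - norm (q k))) *\<^sub>R q k" for k
    unfolding inv using pos1[of k] by (simp add: q_def)
  have qM: "q k \<in> M" for k using conic \<mu>M pos1 by (simp add: q_def less_imp_le)
  have qball: "q k \<in> cball 0 1" for k using nq1[of k] by simp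
  obtain ql r where ql: "ql \<in> cball 0 1" and r: "strict_mono (r :: nat \<Rightarrow> nat)" and qlim: "(q \<circ> r) \<longlonglongrightarrow> ql"
    using seq_compactE[OF compact_imp_seq_compact[OF compact_cball] , of q 0 1] qball by metis
  have qlM: "ql \<in> M" using closed_sequentially[OF clM _ qlim] qM by simp
  have limr: "(\<lambda>n. B (m (r n))) \<longlonglongrightarrow> y"
    using LIMSEQ_subseq_LIMSEQ[OF lim r] by (simp add: o_def)
  have Qlim: "(\<lambda>n. q (r n)) \<longlonglongrightarrow> ql" using qlim by (simp add: o_def)
  have nql: "norm ql \<le> 1" using ql by simp
  show ?thesis
  proof (cases "norm ql < 1")
    case True
    define p where "p = (1 / (1 - norm ql)) *\<^sub>R ql"
    have "(\<lambda>n. (1 / (1 - norm (q (r n)))) *\<^sub>R q (r n)) \<longlonglongrightarrow> p"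
      unfolding p_def using True by (intro tendsto_intros Qlim) auto
    then have mlim: "(\<lambda>n. \<mu> (r n)) \<longlonglongrightarrow> p" using mu_eq by presburger
    have pM: "p \<in> M" using closed_sequentially[OF clM _ mlim] \<mu>M by simp
    have "(\<lambda>n. B (\<mu> (r n))) \<longlonglongrightarrow> B p" using bounded_linear.tendsto[OF bl mlim] .
    then have "(\<lambda>n. B (m (r n))) \<longlonglongrightarrow> B p" using \<mu>B by simp
    then have "y = B p" using limr LIMSEQ_unique by blast
    then show ?thesis using pM by blast
  next
    case False
    then have nql1: "norm ql = 1" using nql by simp
    have rho_lim: "(\<lambda>n. 1 - norm (q (r n))) \<longlonglongrightarrow> 0"
      using tendsto_diff[OF tendsto_const tendsto_norm[OF Qlim], of 1] nql1 by simp
    have Bq: "B ql = 0"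
    proof -
      have "B (q k) = (1 - norm (q k)) *\<^sub>R B (m k)" for k
      proof -
        have "B (q k) = (1 / (1 + norm (\<mu> k))) *\<^sub>R B (\<mu> k)" unfolding q_def by (rule linear_scale[OF lin])
        then show ?thesis by (simp only: rho \<mu>B)
      qed
      then have "(\<lambda>n. B (q (r n))) \<longlonglongrightarrow> 0 *\<^sub>R y"
        using tendsto_scaleR[OF rho_lim limr] by simp
      moreover have "(\<lambda>n. B (q (r n))) \<longlonglongrightarrow> B ql" using bounded_linear.tendsto[OF bl Qlim] .
      ultimately show ?thesis using LIMSEQ_unique by fastforce
    qed
    have ev_rho: "eventually (\<lambda>n. 1 / (1 - norm (q (r n))) \<ge> 2) sequentially"
    proof -
      have "eventually (\<lambda>n. 1 - norm (q (r n)) < 1/2) sequentially"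
        using order_tendstoD(2)[OF rho_lim, of "1/2"] by simp
      then show ?thesis
      proof (rule eventually_mono)
        fix n assume "1 - norm (q (r n)) < 1/2"
        moreover have "1 - norm (q (r n)) > 0" using nq1 by simp
        ultimately show "1 / (1 - norm (q (r n))) \<ge> 2" by (simp add: field_simps)
      qed
    qed
    have ev_dot: "eventually (\<lambda>n. \<mu> (r n) \<bullet> ql \<ge> 1) sequentially"
    proof -
      have l0: "(\<lambda>n. q (r n) \<bullet> ql) \<longlonglongrightarrow> ql \<bullet> ql" by (intro tendsto_intros Qlim)
      moreover have "ql \<bullet> ql = 1" using nql1 by (simp add: power2_norm_eq_inner[symmetric])
      ultimately have l1: "(\<lambda>n. q (r n) \<bullet> ql) \<longlonglongrightarrow> 1" by simp
      have "eventually (\<lambda>n. q (r n) \<bullet> ql > 1/2) sequentially"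
        using order_tendstoD(1)[OF l1, of "1/2"] by simp
      then show ?thesis using ev_rho
      proof (eventually_elim)
        case (elim n)
        have "\<mu> (r n) \<bullet> ql = (1 / (1 - norm (q (r n)))) * (q (r n) \<bullet> ql)"
          by (subst mu_eq) simp
        also have "\<dots> \<ge> 2 * (1/2)" using elim nq1[of "r n"] by (intro mult_mono) auto
        finally show ?case by simp
      qed
    qed
    obtain F where F: "finite F" "M = \<Inter>F" "\<forall>h\<in>F. \<exists>a b. a \<noteq> 0 \<and> h = {x. a \<bullet> x \<le> b}"
      using poly unfolding polyhedron_def by blast
    have "\<forall>h\<in>F. eventually (\<lambda>n. \<mu> (r n) - ql \<in> h) sequentially"
    proof
      fix h assume hF: "h \<in> F"
      then obtain a b where h: "h = {x. a \<bullet> x \<le> b}" using F by blast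
      have Mh: "M \<subseteq> h" using hF F by blast
      have "0 \<in> h" using M0 Mh by blast
      then have b0: "b \<ge> 0" by (simp add: h)
      have aq: "a \<bullet> ql \<le> 0"
      proof (rule ccontr)
        assume "\<not> a \<bullet> ql \<le> 0"
        then have aqp: "a \<bullet> ql > 0" by simp
        have "((b + 1) / (a \<bullet> ql)) *\<^sub>R ql \<in> M" using aqp b0 by (intro conic qlM) simp
        then have "a \<bullet> (((b + 1) / (a \<bullet> ql)) *\<^sub>R ql) \<le> b" using Mh h by blast
        moreover have "a \<bullet> (((b + 1) / (a \<bullet> ql)) *\<^sub>R ql) = b + 1" using aqp by simp
        ultimately show False by simp
      qed
      show "eventually (\<lambda>n. \<mu> (r n) - ql \<in> h) sequentially"
      proof (cases "a \<bullet> ql = 0")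
        case True
        have "a \<bullet> \<mu> (r n) \<le> b" for n using \<mu>M[of "r n"] Mh h by blast
        then show ?thesis using True by (simp add: h inner_diff_right)
      next
        case False
        then have aqn: "a \<bullet> ql < 0" using aq by simp
        have l2: "(\<lambda>n. a \<bullet> q (r n)) \<longlonglongrightarrow> a \<bullet> ql" by (intro tendsto_intros Qlim)
        have "a \<bullet> ql < (a \<bullet> ql) / 2" using aqn by simp
        from order_tendstoD(2)[OF l2 this]
        have "eventually (\<lambda>n. a \<bullet> q (r n) < (a \<bullet> ql) / 2) sequentially" .
        then show ?thesis using ev_rho
        proof (eventually_elim)
          case (elim n)
          have "a \<bullet> \<mu> (r n) = (1 / (1 - norm (q (r n)))) * (a \<bullet> q (r n))"
            by (subst mu_eq) simp
          also have "\<dots> \<le> 2 * (a \<bullet> q (r n))"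
            using elim aqn by (intro mult_right_mono_neg) auto
          also have "\<dots> \<le> a \<bullet> ql" using elim by simp
          finally show ?case using b0 by (simp add: h inner_diff_right)
        qed
      qed
    qed
    then have "eventually (\<lambda>n. \<forall>h\<in>F. \<mu> (r n) - ql \<in> h) sequentially"
      by (rule eventually_ball_finite[OF F(1)])
    then have "eventually (\<lambda>n. False) sequentially" using ev_dot
    proof (eventually_elim)
      case (elim n)
      have inM: "\<mu> (r n) - ql \<in> M" using elim(1) unfolding F(2) by blast
      have "B (\<mu> (r n) - ql) = B (m (r n))"
        using Bq \<mu>B by (simp add: linear_diff[OF lin])
      from \<mu>min[OF inM this] have le: "norm (\<mu> (r n)) \<le> norm (\<mu> (r n) - ql)" .
      have "(norm (\<mu> (r n) - ql))^2 = (norm (\<mu> (r n)))^2 - 2 * (\<mu> (r n) \<bullet> ql) + (norm ql)^2"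
        by (simp add: power2_norm_eq_inner inner_diff_left inner_diff_right inner_commute)
      also have "\<dots> < (norm (\<mu> (r n)))^2" using elim nql1 by simp
      finally have "norm (\<mu> (r n) - ql) < norm (\<mu> (r n))"
        by (simp add: power2_less_imp_less)
      then show ?case using le by simp
    qed
    then show ?thesis by simp
  qed
qed


lemma ball_sub_box:
  fixes z :: "'a::euclidean_space"
  shows "ball z r \<subseteq> cbox (z - r *\<^sub>R One) (z + r *\<^sub>R One)"
proof
  fix x assume "x \<in> ball z r"
  then have n: "norm (x - z) < r" by (simp add: dist_norm norm_minus_commute)
  show "x \<in> cbox (z - r *\<^sub>R One) (z + r *\<^sub>R One)"
    unfolding mem_box
  proof
    fix i :: 'a assume i: "i \<in> Basis"
    have "\<bar>(x - z) \<bullet> i\<bar> \<le> norm (x - z)" using Basis_le_norm[OF i] by simp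
    then have "\<bar>x \<bullet> i - z \<bullet> i\<bar> < r" using n by (simp add: inner_diff_left)
    then show "(z - r *\<^sub>R One) \<bullet> i \<le> x \<bullet> i \<and> x \<bullet> i \<le> (z + r *\<^sub>R One) \<bullet> i"
      using i by (simp add: inner_diff_left inner_add_left abs_less_iff)
  qed
qed

lemma polyrep:
  fixes P :: "'a::euclidean_space set"
  assumes "polyhedron P"
  shows "\<exists>C. finite C \<and> P = {x. \<forall>c\<in>C. fst c \<bullet> x \<le> snd c}"
proof -
  obtain H where H: "finite H" "P = \<Inter>H" "\<forall>h\<in>H. \<exists>a b. a \<noteq> 0 \<and> h = {x. a \<bullet> x \<le> b}"
    using assms unfolding polyhedron_def by blast
  have "\<forall>h\<in>H. \<exists>ab. h = {x. fst ab \<bullet> x \<le> snd ab}"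
  proof
    fix h assume "h \<in> H"
    then obtain a b where "h = {x. a \<bullet> x \<le> b}" using H(3) by blast
    then show "\<exists>ab. h = {x. fst ab \<bullet> x \<le> snd ab}" by (intro exI[of _ "(a,b)"]) simp
  qed
  then obtain f where f: "\<And>h. h \<in> H \<Longrightarrow> h = {x. fst (f h) \<bullet> x \<le> snd (f h)}"
    by metis
  show ?thesis
  proof (intro exI conjI)
    show "finite (f ` H)" using H by simp
    show "P = {x. \<forall>c\<in>f ` H. fst c \<bullet> x \<le> snd c}"
      using H(2) f by auto
  qed
qed


context
  fixes D :: "'b::euclidean_space set" and z :: 'b and r :: real and F :: "'b set set"
    and C :: "'b set \<Rightarrow> ('b \<times> real) set"
  assumes r: "r > 0" and finF: "finite F" and finC: "\<And>P. P \<in> F \<Longrightarrow> finite (C P)"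
    and Prep: "\<And>P. P \<in> F \<Longrightarrow> P = {x. \<forall>c\<in>C P. fst c \<bullet> x \<le> snd c}"
    and Dloc: "D \<inter> cbox (z - r *\<^sub>R One) (z + r *\<^sub>R One) = \<Union>F"
begin

lemma PsubD: "P \<in> F \<Longrightarrow> P \<subseteq> D"
  using Dloc by blast

lemma Pconv: "P \<in> F \<Longrightarrow> convex P"
proof -
  assume P: "P \<in> F"
  have "P = (\<Inter>c\<in>C P. {x. fst c \<bullet> x \<le> snd c})" using Prep[OF P] by auto
  also have "convex \<dots>" by (intro convex_INT ballI convex_halfspace_le)
  finally show ?thesis .
qed

lemma Pclosed: "P \<in> F \<Longrightarrow> closed P"
proof -
  assume P: "P \<in> F"
  have "P = (\<Inter>c\<in>C P. {x. fst c \<bullet> x \<le> snd c})" using Prep[OF P] by auto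
  also have "closed \<dots>" by (intro closed_INT ballI closed_halfspace_le)
  finally show ?thesis .
qed

lemma in_UF: "d \<in> D \<Longrightarrow> norm (d - z) < r \<Longrightarrow> \<exists>P\<in>F. d \<in> P"
proof -
  assume "d \<in> D" "norm (d - z) < r"
  then have "d \<in> ball z r" by (simp add: dist_norm norm_minus_commute)
  then have "d \<in> D \<inter> cbox (z - r *\<^sub>R One) (z + r *\<^sub>R One)" using ball_sub_box \<open>d \<in> D\<close> by blast
  then show ?thesis using Dloc by blast
qed

lemma localD:
  assumes dD: "d \<in> D" and dz: "norm (d - z) < r"
  shows "\<exists>\<delta>>0. \<forall>d'\<in>D. norm (d' - d) < \<delta> \<longrightarrow> (\<exists>P\<in>F. d \<in> P \<and> d' \<in> P)"
proof -
  have ev1: "eventually (\<lambda>d'. d' \<notin> P) (nhds d)" if "P \<in> F" "d \<notin> P" for P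
  proof -
    have "open (- P)" using Pclosed[OF that(1)] by (simp add: open_Compl)
    then show ?thesis unfolding eventually_nhds using that(2) by (intro exI[of _ "- P"]) auto
  qed
  have ev2: "eventually (\<lambda>d'. d' \<in> ball z r) (nhds d)"
  proof -
    have "d \<in> ball z r" using dz by (simp add: dist_norm norm_minus_commute)
    then show ?thesis unfolding eventually_nhds by (intro exI[of _ "ball z r"]) auto
  qed
  have "eventually (\<lambda>d'. \<forall>P\<in>F. d \<notin> P \<longrightarrow> d' \<notin> P) (nhds d)"
    using ev1 by (intro eventually_ball_finite[OF finF]) (auto intro: eventually_mono)
  then have "eventually (\<lambda>d'. (\<forall>P\<in>F. d \<notin> P \<longrightarrow> d' \<notin> P) \<and> d' \<in> ball z r) (nhds d)"
    using ev2 by (rule eventually_conj)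
  then obtain \<delta> where \<delta>: "\<delta> > 0" "\<And>x. dist x d < \<delta> \<Longrightarrow> (\<forall>P\<in>F. d \<notin> P \<longrightarrow> x \<notin> P) \<and> x \<in> ball z r"
    unfolding eventually_nhds_metric by blast
  show ?thesis
  proof (intro exI[of _ \<delta>] conjI ballI impI)
    fix d' assume d': "d' \<in> D" "norm (d' - d) < \<delta>"
    then have h: "(\<forall>P\<in>F. d \<notin> P \<longrightarrow> d' \<notin> P) \<and> d' \<in> ball z r" using \<delta> by (simp add: dist_norm)
    then have "norm (d' - z) < r" by (simp add: dist_norm norm_minus_commute)
    then obtain P where "P \<in> F" "d' \<in> P" using in_UF d' by blast
    then show "\<exists>P\<in>F. d \<in> P \<and> d' \<in> P" using h by blast
  qed (use \<delta> in auto)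
qed

lemma normal_in_M:
  assumes lam: "lm \<in> reg_normal D d" and P: "P \<in> F" "d \<in> P"
    and v: "\<forall>c\<in>C P. fst c \<bullet> d = snd c \<longrightarrow> fst c \<bullet> v \<le> 0"
  shows "lm \<bullet> v \<le> 0"
proof -
  have lP: "lm \<in> reg_normal P d" using rn_mono[OF lam PsubD[OF P(1)] P(2)] .
  have dc: "\<forall>c\<in>C P. fst c \<bullet> d \<le> snd c" using Prep[OF P(1)] P(2) by blast
  have "\<forall>c\<in>C P. eventually (\<lambda>\<tau>. fst c \<bullet> (d + \<tau> *\<^sub>R v) \<le> snd c) (at_right (0::real))"
  proof
    fix c assume c: "c \<in> C P"
    show "eventually (\<lambda>\<tau>. fst c \<bullet> (d + \<tau> *\<^sub>R v) \<le> snd c) (at_right (0::real))"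
    proof (cases "fst c \<bullet> d = snd c")
      case True
      then have av: "fst c \<bullet> v \<le> 0" using v c by blast
      show ?thesis using eventually_at_right_less[of "0::real"]
      proof (rule eventually_mono)
        fix \<tau> :: real assume "0 < \<tau>"
        then have "\<tau> * (fst c \<bullet> v) \<le> 0" using av by (simp add: mult_nonneg_nonpos)
        then show "fst c \<bullet> (d + \<tau> *\<^sub>R v) \<le> snd c" using True by (simp add: inner_add_right)
      qed
    next
      case False
      then have lt: "fst c \<bullet> d < snd c" using dc c by force
      define b0 where "b0 = (snd c - fst c \<bullet> d) / (\<bar>fst c \<bullet> v\<bar> + 1)"
      have b0: "b0 > 0" using lt by (simp add: b0_def add_pos_nonneg)
      show ?thesis unfolding eventually_at_right_field
      proof (intro exI[of _ b0] conjI allI impI)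
        show "b0 > 0" by fact
        fix \<tau> :: real assume "\<tau> > 0" "\<tau> < b0"
        then have "\<tau> * (\<bar>fst c \<bullet> v\<bar> + 1) < b0 * (\<bar>fst c \<bullet> v\<bar> + 1)"
          by (intro mult_strict_right_mono) auto
        also have "\<dots> = snd c - fst c \<bullet> d" by (simp add: b0_def add_pos_nonneg)
        finally have "\<tau> * (\<bar>fst c \<bullet> v\<bar> + 1) < snd c - fst c \<bullet> d" .
        moreover have "\<tau> * (fst c \<bullet> v) \<le> \<tau> * (\<bar>fst c \<bullet> v\<bar> + 1)"
          using \<open>\<tau> > 0\<close> by (intro mult_left_mono) auto
        ultimately show "fst c \<bullet> (d + \<tau> *\<^sub>R v) \<le> snd c" by (simp add: inner_add_right)
      qed
    qed
  qed
  then have "eventually (\<lambda>\<tau>. \<forall>c\<in>C P. fst c \<bullet> (d + \<tau> *\<^sub>R v) \<le> snd c) (at_right (0::real))"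
    by (rule eventually_ball_finite[OF finC[OF P(1)]])
  then have "eventually (\<lambda>\<tau>. (\<forall>c\<in>C P. fst c \<bullet> (d + \<tau> *\<^sub>R v) \<le> snd c) \<and> \<tau> > 0) (at_right (0::real))"
    using eventually_at_right_less[of "0::real"] by (rule eventually_conj)
  then obtain \<tau> :: real where tau: "\<forall>c\<in>C P. fst c \<bullet> (d + \<tau> *\<^sub>R v) \<le> snd c" "\<tau> > 0"
    using eventually_happens[of _ "at_right (0::real)"] by auto
  have "d + \<tau> *\<^sub>R v \<in> P" using tau(1) Prep[OF P(1)] by blast
  from rn_convex[OF Pconv[OF P(1)] lP this]
  have "\<tau> * (lm \<bullet> v) \<le> 0" by simp
  then show ?thesis using tau(2) by (simp add: mult_le_0_iff)
qed

lemma M_normal: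
  assumes dD: "d \<in> D" and dz: "norm (d - z) < r"
    and l: "\<forall>P\<in>F. d \<in> P \<longrightarrow> (\<forall>v. (\<forall>c\<in>C P. fst c \<bullet> d = snd c \<longrightarrow> fst c \<bullet> v \<le> 0) \<longrightarrow> l \<bullet> v \<le> 0)"
  shows "l \<in> reg_normal D d"
  unfolding reg_normal_def
proof (rule CollectI, intro conjI allI impI)
  show "d \<in> D" by fact
  fix e :: real assume e: "e > 0"
  obtain \<delta> where \<delta>: "\<delta> > 0" "\<forall>d'\<in>D. norm (d' - d) < \<delta> \<longrightarrow> (\<exists>P\<in>F. d \<in> P \<and> d' \<in> P)"
    using localD[OF dD dz] by blast
  show "\<exists>\<delta>>0. \<forall>d'\<in>D. norm (d' - d) < \<delta> \<longrightarrow> l \<bullet> (d' - d) \<le> e * norm (d' - d)"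
  proof (intro exI[of _ \<delta>] conjI ballI impI)
    fix d' assume d': "d' \<in> D" "norm (d' - d) < \<delta>"
    then obtain P where P: "P \<in> F" "d \<in> P" "d' \<in> P" using \<delta> by blast
    have "\<forall>c\<in>C P. fst c \<bullet> d = snd c \<longrightarrow> fst c \<bullet> (d' - d) \<le> 0"
    proof (intro ballI impI)
      fix c assume "c \<in> C P" "fst c \<bullet> d = snd c"
      moreover have "fst c \<bullet> d' \<le> snd c" using Prep[OF P(1)] P(3) \<open>c \<in> C P\<close> by blast
      ultimately show "fst c \<bullet> (d' - d) \<le> 0" by (simp add: inner_diff_right)
    qed
    then have "l \<bullet> (d' - d) \<le> 0" using l P by blast
    also have "0 \<le> e * norm (d' - d)" using e by simp
    finally show "l \<bullet> (d' - d) \<le> e * norm (d' - d)" .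
  qed (use \<delta> in auto)
qed

lemma M_poly:
  assumes S: "S \<subseteq> F"
  shows "polyhedron {l. \<forall>P\<in>S. \<forall>v. (\<forall>c\<in>C P. (P,c) \<in> A \<longrightarrow> fst c \<bullet> v \<le> 0) \<longrightarrow> l \<bullet> v \<le> 0}"
proof -
  define G where "G P = fst ` {c\<in>C P. (P,c) \<in> A}" for P
  have finG: "finite (G P)" if "P \<in> S" for P using finC S that by (auto simp: G_def)
  have eq: "{l. \<forall>P\<in>S. \<forall>v. (\<forall>c\<in>C P. (P,c) \<in> A \<longrightarrow> fst c \<bullet> v \<le> 0) \<longrightarrow> l \<bullet> v \<le> 0}
      = \<Inter> ((\<lambda>P. {l. \<forall>v. (\<forall>a\<in>G P. a \<bullet> v \<le> 0) \<longrightarrow> l \<bullet> v \<le> 0}) ` S)"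
  proof -
    have "(\<forall>c\<in>C P. (P,c) \<in> A \<longrightarrow> fst c \<bullet> v \<le> 0) = (\<forall>a\<in>G P. a \<bullet> v \<le> 0)" for P v
      by (auto simp: G_def)
    then show ?thesis by auto
  qed
  show ?thesis unfolding eq
  proof (rule polyhedron_Inter)
    show "finite ((\<lambda>P. {l. \<forall>v. (\<forall>a\<in>G P. a \<bullet> v \<le> 0) \<longrightarrow> l \<bullet> v \<le> 0}) ` S)"
      using S finF finite_subset by blast
    show "polyhedron X" if "X \<in> (\<lambda>P. {l. \<forall>v. (\<forall>a\<in>G P. a \<bullet> v \<le> 0) \<longrightarrow> l \<bullet> v \<le> 0}) ` S" for X
    proof -
      from that obtain P where P: "P \<in> S" "X = {l. \<forall>v. (\<forall>a\<in>G P. a \<bullet> v \<le> 0) \<longrightarrow> l \<bullet> v \<le> 0}" by blast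
      then have "X = convex_cone hull (G P)" using farkas[OF finG[OF P(1)]] by simp
      then show "polyhedron X" using polyhedron_convex_cone_hull[OF finG[OF P(1)]] by simp
    qed
  qed
qed

lemma P2:
  fixes B :: "'b \<Rightarrow> 'c::euclidean_space"
  assumes dD: "\<And>k. d k \<in> D" and dlim: "d \<longlonglongrightarrow> z" and lam: "\<And>k. lm k \<in> reg_normal D (d k)"
    and lin: "linear B" and Blim: "(\<lambda>k. B (lm k)) \<longlonglongrightarrow> xs"
  shows "\<exists>l (rr::nat\<Rightarrow>nat). strict_mono rr \<and> (\<forall>n. l \<in> reg_normal D (d (rr n))) \<and> B l = xs"
proof -
  obtain N where N: "\<forall>k\<ge>N. norm (d k - z) < r" using LIMSEQ_D[OF dlim r] by blast
  define cfg where "cfg k = ({P\<in>F. d k \<in> P}, {(P,c). P\<in>F \<and> c\<in>C P \<and> d k \<in> P \<and> fst c \<bullet> d k = snd c})" for k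
  have "cfg ` {N..} \<subseteq> Pow F \<times> Pow (Sigma F C)" by (auto simp: cfg_def)
  moreover have "finite (Pow F \<times> Pow (Sigma F C))" using finF finC by (auto intro!: finite_SigmaI)
  ultimately have fin: "finite (cfg ` {N..})" by (rule finite_subset)
  obtain k0 where k0: "k0 \<in> {N..}" "infinite {k\<in>{N..}. cfg k = cfg k0}"
    using pigeonhole_infinite[OF infinite_Ici fin] by blast
  define K0 where "K0 = {k\<in>{N..}. cfg k = cfg k0}"
  define rr where "rr = enumerate K0"
  have infK: "infinite K0" using k0 by (simp add: K0_def)
  have rr: "strict_mono rr" unfolding strict_mono_def rr_def using enumerate_mono[OF _ infK] by blast
  have rrK: "rr n \<in> K0" for n unfolding rr_def using enumerate_in_set[OF infK] .
  define S0 where "S0 = {P\<in>F. d k0 \<in> P}"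
  define A0 where "A0 = {(P,c). P\<in>F \<and> c\<in>C P \<and> d k0 \<in> P \<and> fst c \<bullet> d k0 = snd c}"
  have cfgeq: "cfg (rr n) = cfg k0" for n using rrK[of n] by (simp add: K0_def)
  have cfgS: "{P\<in>F. d (rr n) \<in> P} = S0" for n
  proof -
    have "fst (cfg (rr n)) = fst (cfg k0)" using cfgeq[of n] by (rule arg_cong)
    then show ?thesis by (simp only: cfg_def S0_def fst_conv)
  qed
  have cfgA: "{(P,c). P\<in>F \<and> c\<in>C P \<and> d (rr n) \<in> P \<and> fst c \<bullet> d (rr n) = snd c} = A0" for n
  proof -
    have "snd (cfg (rr n)) = snd (cfg k0)" using cfgeq[of n] by (rule arg_cong)
    then show ?thesis by (simp only: cfg_def A0_def snd_conv)
  qed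
  have rrN: "norm (d (rr n) - z) < r" for n using rrK[of n] N by (auto simp: K0_def)
  define M0 where "M0 = {l. \<forall>P\<in>S0. \<forall>v. (\<forall>c\<in>C P. (P,c) \<in> A0 \<longrightarrow> fst c \<bullet> v \<le> 0) \<longrightarrow> l \<bullet> v \<le> 0}"
  have S0F: "S0 \<subseteq> F" by (auto simp: S0_def)
  have polyM: "polyhedron M0" unfolding M0_def by (rule M_poly[OF S0F])
  have M00: "0 \<in> M0" by (simp add: M0_def)
  have conM: "t *\<^sub>R x \<in> M0" if "x \<in> M0" "t \<ge> 0" for x t
    using that by (auto simp: M0_def mult_nonneg_nonpos)
  have lamM: "lm (rr n) \<in> M0" for n
    unfolding M0_def
  proof (intro CollectI ballI allI impI)
    fix P v assume P: "P \<in> S0" and cv: "\<forall>c\<in>C P. (P,c) \<in> A0 \<longrightarrow> fst c \<bullet> v \<le> 0"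
    have PF: "P \<in> F" "d (rr n) \<in> P" using P cfgS[of n] by auto
    have "\<forall>c\<in>C P. fst c \<bullet> d (rr n) = snd c \<longrightarrow> fst c \<bullet> v \<le> 0"
    proof (intro ballI impI)
      fix c assume "c \<in> C P" "fst c \<bullet> d (rr n) = snd c"
      then have "(P,c) \<in> A0" using PF cfgA[of n] by blast
      then show "fst c \<bullet> v \<le> 0" using cv \<open>c \<in> C P\<close> by blast
    qed
    then show "lm (rr n) \<bullet> v \<le> 0" using normal_in_M[OF lam PF] by blast
  qed
  have "(\<lambda>n. B (lm (rr n))) \<longlonglongrightarrow> xs" using LIMSEQ_subseq_LIMSEQ[OF Blim rr] by (simp add: o_def)
  then have "xs \<in> B ` M0" using polycone_image_closed[where m="\<lambda>n. lm (rr n)", OF polyM M00 conM lin lamM] by blast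
  then obtain l where l: "l \<in> M0" "B l = xs" by blast
  have "l \<in> reg_normal D (d (rr n))" for n
  proof (rule M_normal[OF dD rrN])
    show "\<forall>P\<in>F. d (rr n) \<in> P \<longrightarrow> (\<forall>v. (\<forall>c\<in>C P. fst c \<bullet> d (rr n) = snd c \<longrightarrow> fst c \<bullet> v \<le> 0) \<longrightarrow> l \<bullet> v \<le> 0)"
    proof (intro ballI impI allI)
      fix P v assume P: "P \<in> F" "d (rr n) \<in> P" and cv: "\<forall>c\<in>C P. fst c \<bullet> d (rr n) = snd c \<longrightarrow> fst c \<bullet> v \<le> 0"
      have PS: "P \<in> S0" using P cfgS[of n] by auto
      have "\<forall>c\<in>C P. (P,c) \<in> A0 \<longrightarrow> fst c \<bullet> v \<le> 0"
      proof (intro ballI impI)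
        fix c assume "c \<in> C P" "(P,c) \<in> A0"
        then have "fst c \<bullet> d (rr n) = snd c" using cfgA[of n] by blast
        then show "fst c \<bullet> v \<le> 0" using cv \<open>c \<in> C P\<close> by blast
      qed
      then show "l \<bullet> v \<le> 0" using l(1) PS unfolding M0_def by blast
    qed
  qed
  then have "\<forall>n. l \<in> reg_normal D (d (rr n))" by blast
  then show ?thesis using rr l(2) by blast
qed

lemma P1:
  assumes dD: "\<And>k. d k \<in> D" and dt: "\<And>k. d k = z + t k *\<^sub>R w k" and tpos: "\<And>k. t k > 0"
    and tlim: "t \<longlonglongrightarrow> 0" and wlim: "w \<longlonglongrightarrow> w0" and lam: "\<And>k. lm k \<in> reg_normal D (d k)"
  shows "eventually (\<lambda>k. lm k \<bullet> w k = 0 \<and> lm k \<bullet> w0 = 0) sequentially"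
proof -
  define p2 where "p2 k = z + (2 * t k) *\<^sub>R w k" for k
  define p3 where "p3 k = z + t k *\<^sub>R w0" for k
  define p4 where "p4 k = z + t k *\<^sub>R (2 *\<^sub>R w k - w0)" for k
  have dlim: "d \<longlonglongrightarrow> z"
  proof -
    have "(\<lambda>k. z + t k *\<^sub>R w k) \<longlonglongrightarrow> z + 0 *\<^sub>R w0" by (intro tendsto_intros tlim wlim)
    moreover have "d = (\<lambda>k. z + t k *\<^sub>R w k)" by (rule ext) (rule dt)
    ultimately show ?thesis by simp
  qed
  have p2lim: "p2 \<longlonglongrightarrow> z"
  proof -
    have "(\<lambda>k. z + (2 * t k) *\<^sub>R w k) \<longlonglongrightarrow> z + (2 * 0) *\<^sub>R w0" by (intro tendsto_intros tlim wlim)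
    then show ?thesis by (simp add: p2_def[abs_def])
  qed
  have p3lim: "p3 \<longlonglongrightarrow> z"
  proof -
    have "(\<lambda>k. z + t k *\<^sub>R w0) \<longlonglongrightarrow> z + 0 *\<^sub>R w0" by (intro tendsto_intros tlim)
    then show ?thesis by (simp add: p3_def[abs_def])
  qed
  have p4lim: "p4 \<longlonglongrightarrow> z"
  proof -
    have "(\<lambda>k. z + t k *\<^sub>R (2 *\<^sub>R w k - w0)) \<longlonglongrightarrow> z + 0 *\<^sub>R (2 *\<^sub>R w0 - w0)" by (intro tendsto_intros tlim wlim)
    then show ?thesis by (simp add: p4_def[abs_def])
  qed
  have key: "\<forall>P\<in>F. eventually (\<lambda>k. d k \<in> P \<longrightarrow> z \<in> P \<and> p2 k \<in> P \<and> p3 k \<in> P \<and> p4 k \<in> P) sequentially"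
  proof
    fix P assume PF: "P \<in> F"
    show "eventually (\<lambda>k. d k \<in> P \<longrightarrow> z \<in> P \<and> p2 k \<in> P \<and> p3 k \<in> P \<and> p4 k \<in> P) sequentially"
    proof (cases "z \<in> P")
      case False
      have "open (- P)" using Pclosed[OF PF] by (simp add: open_Compl)
      then have "eventually (\<lambda>k. d k \<in> - P) sequentially"
        using topological_tendstoD[OF dlim] False by blast
      then show ?thesis by (rule eventually_mono) auto
    next
      case True
      have "\<forall>c\<in>C P. eventually (\<lambda>k. d k \<in> P \<longrightarrow> fst c \<bullet> p2 k \<le> snd c \<and> fst c \<bullet> p3 k \<le> snd c \<and> fst c \<bullet> p4 k \<le> snd c) sequentially"
      proof
        fix c assume cC: "c \<in> C P"
        obtain a b where cab: "c = (a, b)" by (cases c)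
        have az: "a \<bullet> z \<le> b" using True Prep[OF PF] cC cab by fastforce
        have "eventually (\<lambda>k. d k \<in> P \<longrightarrow> a \<bullet> p2 k \<le> b \<and> a \<bullet> p3 k \<le> b \<and> a \<bullet> p4 k \<le> b) sequentially"
        proof (cases "a \<bullet> z < b")
          case True
          have l2: "(\<lambda>k. a \<bullet> p2 k) \<longlonglongrightarrow> a \<bullet> z" by (intro tendsto_intros p2lim)
          have l3: "(\<lambda>k. a \<bullet> p3 k) \<longlonglongrightarrow> a \<bullet> z" by (intro tendsto_intros p3lim)
          have l4: "(\<lambda>k. a \<bullet> p4 k) \<longlonglongrightarrow> a \<bullet> z" by (intro tendsto_intros p4lim)
          have e2: "eventually (\<lambda>k. a \<bullet> p2 k < b) sequentially" using order_tendstoD(2)[OF l2 True] .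
          have e3: "eventually (\<lambda>k. a \<bullet> p3 k < b) sequentially" using order_tendstoD(2)[OF l3 True] .
          have e4: "eventually (\<lambda>k. a \<bullet> p4 k < b) sequentially" using order_tendstoD(2)[OF l4 True] .
          from e2 e3 e4 show ?thesis by eventually_elim auto
        next
          case False
          then have azb: "a \<bullet> z = b" using az by simp
          have aw: "a \<bullet> w k \<le> 0" if "d k \<in> P" for k
          proof -
            have "a \<bullet> d k \<le> b" using that Prep[OF PF] cC cab by fastforce
            then have "t k * (a \<bullet> w k) \<le> 0" using azb by (simp add: dt inner_add_right)
            then show ?thesis using tpos[of k] by (simp add: mult_le_0_iff)
          qed
          have lw: "(\<lambda>k. a \<bullet> w k) \<longlonglongrightarrow> a \<bullet> w0" by (intro tendsto_intros wlim)
          show ?thesis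
          proof (cases "a \<bullet> w0 > 0")
            case True
            have "eventually (\<lambda>k. a \<bullet> w k > 0) sequentially" using order_tendstoD(1)[OF lw True] .
            then show ?thesis by (rule eventually_mono) (use aw in force)
          next
            case False
            then have aw0: "a \<bullet> w0 \<le> 0" by simp
            have "eventually (\<lambda>k. a \<bullet> w0 < 0 \<longrightarrow> a \<bullet> w k < a \<bullet> w0 / 2) sequentially"
            proof (cases "a \<bullet> w0 < 0")
              case True
              then have "a \<bullet> w0 < a \<bullet> w0 / 2" by simp
              from order_tendstoD(2)[OF lw this] show ?thesis by (rule eventually_mono) simp
            qed simp
            then show ?thesis
            proof (rule eventually_mono)
              fix k assume h: "a \<bullet> w0 < 0 \<longrightarrow> a \<bullet> w k < a \<bullet> w0 / 2"
              show "d k \<in> P \<longrightarrow> a \<bullet> p2 k \<le> b \<and> a \<bullet> p3 k \<le> b \<and> a \<bullet> p4 k \<le> b"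
              proof
                assume dk: "d k \<in> P"
                have awk: "a \<bullet> w k \<le> 0" using aw[OF dk] .
                have tk: "t k > 0" by (rule tpos)
                have "2 * (a \<bullet> w k) - a \<bullet> w0 \<le> 0" using h awk aw0 by linarith
                then have q4: "t k * (2 * (a \<bullet> w k) - a \<bullet> w0) \<le> 0" using tk by (simp add: mult_le_0_iff)
                have q2: "(2 * t k) * (a \<bullet> w k) \<le> 0" using tk awk by (simp add: mult_le_0_iff)
                have q3: "t k * (a \<bullet> w0) \<le> 0" using tk aw0 by (simp add: mult_le_0_iff)
                show "a \<bullet> p2 k \<le> b \<and> a \<bullet> p3 k \<le> b \<and> a \<bullet> p4 k \<le> b"
                  using q2 q3 q4 azb
                  by (simp add: p2_def p3_def p4_def inner_add_right inner_diff_right algebra_simps)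
              qed
            qed
          qed
        qed
        then show "eventually (\<lambda>k. d k \<in> P \<longrightarrow> fst c \<bullet> p2 k \<le> snd c \<and> fst c \<bullet> p3 k \<le> snd c \<and> fst c \<bullet> p4 k \<le> snd c) sequentially"
          by (simp add: cab)
      qed
      then have "eventually (\<lambda>k. \<forall>c\<in>C P. d k \<in> P \<longrightarrow> fst c \<bullet> p2 k \<le> snd c \<and> fst c \<bullet> p3 k \<le> snd c \<and> fst c \<bullet> p4 k \<le> snd c) sequentially"
        by (rule eventually_ball_finite[OF finC[OF PF]])
      then show ?thesis
      proof (rule eventually_mono)
        fix k assume h: "\<forall>c\<in>C P. d k \<in> P \<longrightarrow> fst c \<bullet> p2 k \<le> snd c \<and> fst c \<bullet> p3 k \<le> snd c \<and> fst c \<bullet> p4 k \<le> snd c"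
        show "d k \<in> P \<longrightarrow> z \<in> P \<and> p2 k \<in> P \<and> p3 k \<in> P \<and> p4 k \<in> P"
        proof
          assume "d k \<in> P"
          then have "\<forall>c\<in>C P. fst c \<bullet> p2 k \<le> snd c \<and> fst c \<bullet> p3 k \<le> snd c \<and> fst c \<bullet> p4 k \<le> snd c" using h by blast
          then show "z \<in> P \<and> p2 k \<in> P \<and> p3 k \<in> P \<and> p4 k \<in> P"
            using True Prep[OF PF] by blast
        qed
      qed
    qed
  qed
  have ev1: "eventually (\<lambda>k. \<forall>P\<in>F. d k \<in> P \<longrightarrow> z \<in> P \<and> p2 k \<in> P \<and> p3 k \<in> P \<and> p4 k \<in> P) sequentially"
    by (rule eventually_ball_finite[OF finF key])
  obtain N where N: "\<forall>k\<ge>N. norm (d k - z) < r" using LIMSEQ_D[OF dlim r] by blast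
  have ev2: "eventually (\<lambda>k. norm (d k - z) < r) sequentially"
    unfolding eventually_sequentially using N by blast
  from ev1 ev2 show ?thesis
  proof (eventually_elim)
    case (elim k)
    obtain P where P: "P \<in> F" "d k \<in> P" using in_UF[OF dD elim(2)] by blast
    have pts: "z \<in> P" "p2 k \<in> P" "p3 k \<in> P" "p4 k \<in> P" using elim(1) P by blast+
    have lP: "lm k \<in> reg_normal P (d k)" using rn_mono[OF lam PsubD[OF P(1)] P(2)] .
    have cv: "convex P" using Pconv[OF P(1)] .
    have tk: "t k > 0" by (rule tpos)
    have i1: "lm k \<bullet> (z - d k) \<le> 0" by (rule rn_convex[OF cv lP pts(1)])
    have i2: "lm k \<bullet> (p2 k - d k) \<le> 0" by (rule rn_convex[OF cv lP pts(2)])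
    have i3: "lm k \<bullet> (p3 k - d k) \<le> 0" by (rule rn_convex[OF cv lP pts(3)])
    have i4: "lm k \<bullet> (p4 k - d k) \<le> 0" by (rule rn_convex[OF cv lP pts(4)])
    have "z - d k = (- t k) *\<^sub>R w k" by (simp add: dt)
    then have j1: "- t k * (lm k \<bullet> w k) \<le> 0" using i1 by simp
    have "p2 k - d k = t k *\<^sub>R w k" by (simp add: dt p2_def algebra_simps scaleR_2 flip: scaleR_scaleR)
    then have j2: "t k * (lm k \<bullet> w k) \<le> 0" using i2 by simp
    have "p3 k - d k = t k *\<^sub>R (w0 - w k)" by (simp add: dt p3_def algebra_simps)
    then have j3: "t k * (lm k \<bullet> w0 - lm k \<bullet> w k) \<le> 0" using i3 by (simp add: inner_diff_right)
    have "p4 k - d k = t k *\<^sub>R (w k - w0)" by (simp add: dt p4_def algebra_simps scaleR_2 flip: scaleR_scaleR)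
    then have j4: "t k * (lm k \<bullet> w k - lm k \<bullet> w0) \<le> 0" using i4 by (simp add: inner_diff_right)
    have "lm k \<bullet> w k \<ge> 0" using j1 tk by (simp add: zero_le_mult_iff)
    moreover have "lm k \<bullet> w k \<le> 0" using j2 tk by (simp add: mult_le_0_iff)
    moreover have "lm k \<bullet> w0 - lm k \<bullet> w k \<le> 0" using j3 tk by (simp add: mult_le_0_iff)
    moreover have "lm k \<bullet> w k - lm k \<bullet> w0 \<le> 0" using j4 tk by (simp add: mult_le_0_iff)
    ultimately show ?case by linarith
  qed
qed

end


lemma taylor2:
  fixes g :: "'a::euclidean_space \<Rightarrow> 'b::euclidean_space"
    and g' :: "'a \<Rightarrow> 'a \<Rightarrow>\<^sub>L 'b"
    and g'' :: "'a \<Rightarrow> 'a \<Rightarrow>\<^sub>L 'a \<Rightarrow>\<^sub>L 'b"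
  assumes d1: "\<And>x. (g has_derivative blinfun_apply (g' x)) (at x)"
    and d2: "\<And>x. (g' has_derivative blinfun_apply (g'' x)) (at x)"
    and c2: "continuous_on UNIV g''"
    and ep: "\<epsilon> > 0"
  shows "\<exists>\<delta>>0. \<forall>x. norm (x - xb) < \<delta> \<longrightarrow>
     norm (g x - g xb - g' x (x - xb) + (1/2) *\<^sub>R (g'' xb (x - xb) (x - xb))) \<le> \<epsilon> * (norm (x - xb))^2"
proof -
  have "isCont g'' xb" using c2 continuous_on_eq_continuous_at[OF open_UNIV] by blast
  then obtain \<delta> where \<delta>: "\<delta> > 0" "\<And>y. dist y xb < \<delta> \<Longrightarrow> dist (g'' y) (g'' xb) < \<epsilon>"
    unfolding continuous_at_eps_delta using ep by blast
  show ?thesis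
  proof (intro exI[of _ \<delta>] conjI allI impI)
    show "\<delta> > 0" by fact
    fix x assume hx: "norm (x - xb) < \<delta>"
    define h where "h = x - xb"
    define K where "K = g'' xb h h"
    define \<phi> where "\<phi> s = g (xb + s *\<^sub>R h) - s *\<^sub>R (g' (xb + s *\<^sub>R h) h) + (s * s / 2) *\<^sub>R K" for s :: real
    define V where "V s = s *\<^sub>R (K - g'' (xb + s *\<^sub>R h) h h)" for s :: real
    have der: "(\<phi> has_derivative (\<lambda>ds. ds *\<^sub>R V s)) (at s within {0..1})" for s
    proof -
      have p: "((\<lambda>s. xb + s *\<^sub>R h) has_derivative (\<lambda>ds. ds *\<^sub>R h)) (at s within {0..1})"
        by (auto intro!: derivative_eq_intros)
      have A: "((\<lambda>s. g (xb + s *\<^sub>R h)) has_derivative (\<lambda>ds. g' (xb + s *\<^sub>R h) (ds *\<^sub>R h))) (at s within {0..1})"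
        using has_derivative_compose[OF p d1] .
      have B: "((\<lambda>s. g' (xb + s *\<^sub>R h)) has_derivative (\<lambda>ds. g'' (xb + s *\<^sub>R h) (ds *\<^sub>R h))) (at s within {0..1})"
        using has_derivative_compose[OF p d2] .
      have B2: "((\<lambda>s. blinfun_apply (g' (xb + s *\<^sub>R h)) h) has_derivative (\<lambda>ds. blinfun_apply (g'' (xb + s *\<^sub>R h) (ds *\<^sub>R h)) h)) (at s within {0..1})"
        using bounded_linear.has_derivative[OF blinfun.bounded_linear_left B] .
      have B3: "((\<lambda>s. s *\<^sub>R blinfun_apply (g' (xb + s *\<^sub>R h)) h) has_derivative
          (\<lambda>ds. s *\<^sub>R blinfun_apply (g'' (xb + s *\<^sub>R h) (ds *\<^sub>R h)) h + ds *\<^sub>R blinfun_apply (g' (xb + s *\<^sub>R h)) h)) (at s within {0..1})"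
        using has_derivative_scaleR[OF has_derivative_ident B2] .
      have Cc: "((\<lambda>s. (s * s / 2) *\<^sub>R K) has_derivative (\<lambda>ds. (s * ds) *\<^sub>R K)) (at s within {0..1})"
        by (auto intro!: derivative_eq_intros simp: algebra_simps)
      have "(\<phi> has_derivative (\<lambda>ds. g' (xb + s *\<^sub>R h) (ds *\<^sub>R h) -
          (s *\<^sub>R blinfun_apply (g'' (xb + s *\<^sub>R h) (ds *\<^sub>R h)) h + ds *\<^sub>R blinfun_apply (g' (xb + s *\<^sub>R h)) h)
          + (s * ds) *\<^sub>R K)) (at s within {0..1})"
        unfolding \<phi>_def[abs_def] by (intro has_derivative_add has_derivative_diff A B3 Cc)
      moreover have "(\<lambda>ds. g' (xb + s *\<^sub>R h) (ds *\<^sub>R h) -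
          (s *\<^sub>R blinfun_apply (g'' (xb + s *\<^sub>R h) (ds *\<^sub>R h)) h + ds *\<^sub>R blinfun_apply (g' (xb + s *\<^sub>R h)) h)
          + (s * ds) *\<^sub>R K) = (\<lambda>ds. ds *\<^sub>R V s)"
        by (rule ext) (simp add: V_def blinfun.scaleR_right blinfun.scaleR_left algebra_simps)
      ultimately show ?thesis by simp
    qed
    have bnd: "onorm (\<lambda>ds. ds *\<^sub>R V s) \<le> \<epsilon> * (norm h)^2" if s: "s \<in> {0..1}" for s
    proof -
      have "onorm (\<lambda>ds. ds *\<^sub>R V s) = norm (V s)"
        using onorm_scaleR_left[of "\<lambda>x::real. x" "V s"] onorm_id[where 'a=real] by simp
      also have "\<dots> = \<bar>s\<bar> * norm (K - g'' (xb + s *\<^sub>R h) h h)" by (simp add: V_def)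
      also have "\<dots> \<le> 1 * norm (K - g'' (xb + s *\<^sub>R h) h h)" using s by (intro mult_right_mono) auto
      also have "K - g'' (xb + s *\<^sub>R h) h h = (g'' xb - g'' (xb + s *\<^sub>R h)) h h"
        by (simp add: K_def blinfun.diff_left)
      also have "norm \<dots> \<le> norm ((g'' xb - g'' (xb + s *\<^sub>R h)) h) * norm h" by (rule norm_blinfun)
      also have "\<dots> \<le> (norm (g'' xb - g'' (xb + s *\<^sub>R h)) * norm h) * norm h"
        by (intro mult_right_mono norm_blinfun) auto
      also have "norm (g'' xb - g'' (xb + s *\<^sub>R h)) \<le> \<epsilon>"
      proof -
        have "norm (s *\<^sub>R h) \<le> norm h" using s by (auto simp: mult_left_le_one_le)
        then have "dist (xb + s *\<^sub>R h) xb < \<delta>" using hx by (simp add: dist_norm h_def)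
        then have "dist (g'' (xb + s *\<^sub>R h)) (g'' xb) < \<epsilon>" by (rule \<delta>(2))
        then show ?thesis by (simp add: dist_norm norm_minus_commute)
      qed
      finally show ?thesis by (simp add: power2_eq_square mult_right_mono mult.assoc)
    qed
    have "norm (\<phi> 1 - \<phi> 0) \<le> (\<epsilon> * (norm h)^2) * norm (1 - (0::real))"
      by (rule differentiable_bound[OF convex_real_interval(5) der bnd]) auto
    moreover have "\<phi> 1 - \<phi> 0 = g x - g xb - g' x (x - xb) + (1/2) *\<^sub>R (g'' xb (x - xb) (x - xb))"
      by (simp add: \<phi>_def h_def K_def)
    ultimately show "norm (g x - g xb - g' x (x - xb) + (1/2) *\<^sub>R (g'' xb (x - xb) (x - xb))) \<le> \<epsilon> * (norm (x - xb))^2"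
      by (simp add: h_def)
  qed
qed


lemma deriv_seq:
  assumes der: "(f has_derivative f') (at a)" and xl: "x \<longlonglongrightarrow> a" and xne: "\<And>k. x k \<noteq> a"
  shows "(\<lambda>k. norm (f (x k) - f a - f' (x k - a)) / norm (x k - a)) \<longlonglongrightarrow> 0"
proof -
  have L: "((\<lambda>y. norm (f y - f a - f' (y - a)) / norm (y - a)) \<longlongrightarrow> 0) (at a)"
    using der unfolding has_derivative_iff_norm by simp
  have "filterlim x (at a) sequentially"
    unfolding filterlim_at using xl xne by auto
  from filterlim_compose[OF L this] show ?thesis by simp
qed

lemma adj_bound:
  fixes F G :: "'a::euclidean_space \<Rightarrow>\<^sub>L 'b::euclidean_space"
  shows "norm (adjoint (blinfun_apply F) l - adjoint (blinfun_apply G) l) \<le> norm (F - G) * norm l"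
proof -
  define v where "v = adjoint (blinfun_apply F) l - adjoint (blinfun_apply G) l"
  have linF: "linear (blinfun_apply F)" and linG: "linear (blinfun_apply G)"
    by (simp_all add: blinfun.bounded_linear_right bounded_linear.linear)
  have "(norm v)^2 = v \<bullet> adjoint (blinfun_apply F) l - v \<bullet> adjoint (blinfun_apply G) l"
    by (simp add: v_def power2_norm_eq_inner inner_diff_right)
  also have "\<dots> = F v \<bullet> l - G v \<bullet> l" by (simp add: adjoint_works[OF linF] adjoint_works[OF linG])
  also have "\<dots> = (F - G) v \<bullet> l" by (simp add: blinfun.diff_left inner_diff_left)
  also have "\<dots> \<le> norm ((F - G) v) * norm l" by (rule Cauchy_Schwarz_ineq2[THEN abs_le_D1])
  also have "\<dots> \<le> (norm (F - G) * norm v) * norm l" by (intro mult_right_mono norm_blinfun) auto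
  finally have "norm v * norm v \<le> norm v * (norm (F - G) * norm l)" by (simp add: power2_eq_square algebra_simps)
  then have "norm v \<le> norm (F - G) * norm l" if "norm v > 0" using that by (simp add: mult_le_cancel_left_pos)
  then show ?thesis unfolding v_def[symmetric] by (cases "norm v > 0") auto
qed


context
  fixes g :: "'a::euclidean_space \<Rightarrow> 'b::euclidean_space"
    and g' :: "'a \<Rightarrow> 'a \<Rightarrow>\<^sub>L 'b"
    and g'' :: "'a \<Rightarrow> 'a \<Rightarrow>\<^sub>L 'a \<Rightarrow>\<^sub>L 'b"
    and D :: "'b set" and xbar u :: 'a
    and x :: "nat \<Rightarrow> 'a" and y :: "nat \<Rightarrow> 'b" and xs :: "nat \<Rightarrow> 'a" and lam :: "nat \<Rightarrow> 'b" and xstar :: 'a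
  assumes d1: "\<And>x. (g has_derivative blinfun_apply (g' x)) (at x)"
    and d2: "\<And>x. (g' has_derivative blinfun_apply (g'' x)) (at x)"
    and c2: "continuous_on UNIV g''"
    and zD: "g xbar \<in> D"
    and GR: "\<And>k. (xs k, - lam k) \<in> reg_normal {(x,y). g x - y \<in> D} (x k, y k)"
    and xne: "\<And>k. x k \<noteq> xbar" and yne: "\<And>k. y k \<noteq> 0"
    and xlim: "x \<longlonglongrightarrow> xbar" and ylim: "y \<longlonglongrightarrow> 0" and xslim: "xs \<longlonglongrightarrow> xstar"
    and ulim: "(\<lambda>k. (1 / norm (x k - xbar)) *\<^sub>R (x k - xbar)) \<longlonglongrightarrow> u"
    and ytl: "(\<lambda>k. (1 / norm (x k - xbar)) *\<^sub>R y k) \<longlonglongrightarrow> 0"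
    and slim: "filterlim (\<lambda>k. norm (lam k)) at_top sequentially"
    and align: "(\<lambda>k. (1 / norm (y k)) *\<^sub>R y k - (1 / norm (lam k)) *\<^sub>R lam k) \<longlonglongrightarrow> 0"
begin

definition "tt k = norm (x k - xbar)"
definition "uu k = (1 / tt k) *\<^sub>R (x k - xbar)"
definition "ss k = norm (lam k)"
definition "eta k = (1 / ss k) *\<^sub>R lam k"
definition "dk k = g (x k) - y k"
definition "ww k = (1 / tt k) *\<^sub>R (dk k - g xbar)"

lemma tt_pos: "tt k > 0" using xne[of k] by (simp add: tt_def)

lemma tt_lim: "tt \<longlonglongrightarrow> 0"
proof -
  have "(\<lambda>k. norm (x k - xbar)) \<longlonglongrightarrow> norm (xbar - xbar)" by (intro tendsto_intros xlim)
  then show ?thesis by (simp add: tt_def[abs_def])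
qed

lemma uu_lim: "uu \<longlonglongrightarrow> u" using ulim by (simp add: uu_def[abs_def] tt_def[abs_def])

lemma lamN: "lam k \<in> reg_normal D (dk k)" unfolding dk_def by (rule gn_D[OF GR])

lemma dkD: "dk k \<in> D" using rn_mem[OF lamN] .

lemma xs_eq: "xs k = adjoint (blinfun_apply (g' (x k))) (lam k)" by (rule gn_adj[OF GR d1])

lemma dk_eq: "dk k = g xbar + tt k *\<^sub>R ww k"
  using tt_pos[of k] by (simp add: ww_def)

lemma g'_lim: "(\<lambda>k. g' (x k)) \<longlonglongrightarrow> g' xbar"
proof -
  have "isCont g' xbar" using has_derivative_continuous[OF d2] .
  then show ?thesis using isCont_tendsto_compose xlim by blast
qed

lemma g_lim: "(\<lambda>k. g (x k)) \<longlonglongrightarrow> g xbar"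
proof -
  have "isCont g xbar" using has_derivative_continuous[OF d1] .
  then show ?thesis using isCont_tendsto_compose xlim by blast
qed

lemma dk_lim: "dk \<longlonglongrightarrow> g xbar"
proof -
  have "(\<lambda>k. g (x k) - y k) \<longlonglongrightarrow> g xbar - 0" by (intro tendsto_intros g_lim ylim)
  then show ?thesis by (simp add: dk_def[abs_def])
qed

lemma ww_lim: "ww \<longlonglongrightarrow> g' xbar u"
proof -
  define e where "e k = (1 / tt k) *\<^sub>R (g (x k) - g xbar - g' xbar (x k - xbar))" for k
  have "(\<lambda>k. norm (g (x k) - g xbar - g' xbar (x k - xbar)) / norm (x k - xbar)) \<longlonglongrightarrow> 0"
    by (rule deriv_seq[OF d1 xlim xne])
  then have "(\<lambda>k. norm (e k)) \<longlonglongrightarrow> 0" using tt_pos by (simp add: e_def tt_def)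
  then have el: "e \<longlonglongrightarrow> 0" by (simp add: tendsto_norm_zero_iff)
  have "(\<lambda>k. g' xbar (uu k) + e k - (1 / tt k) *\<^sub>R y k) \<longlonglongrightarrow> g' xbar u + 0 - 0"
    using ytl by (intro tendsto_intros uu_lim el) (simp add: tt_def[abs_def])
  moreover have "ww k = g' xbar (uu k) + e k - (1 / tt k) *\<^sub>R y k" for k
    by (simp add: ww_def e_def uu_def dk_def blinfun.scaleR_right blinfun.diff_right algebra_simps)
  moreover have "ww = (\<lambda>k. g' xbar (uu k) + e k - (1 / tt k) *\<^sub>R y k)" using calculation(2) by (rule ext)
  ultimately show ?thesis by simp
qed

lemma ss_ev: "eventually (\<lambda>k. ss k > 0) sequentially"
proof -
  have "eventually (\<lambda>k. 1 \<le> norm (lam k)) sequentially" using slim unfolding filterlim_at_top by blast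
  then show ?thesis
  proof (rule eventually_mono)
    fix k assume "1 \<le> norm (lam k)" then show "ss k > 0" unfolding ss_def by linarith
  qed
qed

lemma eta_norm_ev: "eventually (\<lambda>k. norm (eta k) = 1) sequentially"
  using ss_ev by (rule eventually_mono) (simp add: eta_def ss_def)

lemma eta_ball: "norm (eta k) \<le> 1"
  by (cases "lam k = 0") (simp_all add: eta_def ss_def)

lemma etaN: "eta k \<in> reg_normal D (dk k)"
  unfolding eta_def by (rule rn_scale[OF lamN]) (simp add: ss_def)

lemma inv_ss_lim: "(\<lambda>k. 1 / ss k) \<longlonglongrightarrow> 0"
  using tendsto_inverse_0_at_top[OF slim] by (simp add: ss_def[abs_def] divide_inverse)

lemma limdir:
  assumes rr: "strict_mono rr" and el: "(\<lambda>n. eta (rr n)) \<longlonglongrightarrow> \<eta>"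
  shows "\<eta> \<in> dir_lim_normal D (g xbar) (g' xbar u)"
    and "adjoint (blinfun_apply (g' xbar)) \<eta> = 0"
    and "norm \<eta> = 1"
proof -
  show "\<eta> \<in> dir_lim_normal D (g xbar) (g' xbar u)"
    unfolding dir_lim_normal_def
  proof (rule CollectI, rule exI[of _ "\<lambda>n. tt (rr n)"], rule exI[of _ "\<lambda>n. ww (rr n)"], rule exI[of _ "\<lambda>n. eta (rr n)"], intro conjI allI)
    show "0 < tt (rr k)" for k by (rule tt_pos)
    show "(\<lambda>n. tt (rr n)) \<longlonglongrightarrow> 0" using LIMSEQ_subseq_LIMSEQ[OF tt_lim rr] by (simp add: o_def)
    show "(\<lambda>n. ww (rr n)) \<longlonglongrightarrow> g' xbar u" using LIMSEQ_subseq_LIMSEQ[OF ww_lim rr] by (simp add: o_def)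
    show "(\<lambda>n. eta (rr n)) \<longlonglongrightarrow> \<eta>" using el by simp
    show "eta (rr k) \<in> reg_normal D (g xbar + tt (rr k) *\<^sub>R ww (rr k))" for k
      using etaN[of "rr k"] dk_eq[of "rr k"] by simp
  qed
  have lin0: "linear (blinfun_apply (g' xbar))" by (simp add: blinfun.bounded_linear_right bounded_linear.linear)
  have zero: "g' xbar v \<bullet> \<eta> = 0" for v
  proof -
    have A: "(\<lambda>n. g' (x (rr n))) \<longlonglongrightarrow> g' xbar"
      using LIMSEQ_subseq_LIMSEQ[OF g'_lim rr] by (simp add: o_def)
    have A2: "(\<lambda>n. blinfun_apply (g' (x (rr n))) v) \<longlonglongrightarrow> blinfun_apply (g' xbar) v"
      by (rule bounded_bilinear.tendsto[OF bounded_bilinear_blinfun_apply A tendsto_const])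
    have l1: "(\<lambda>n. g' (x (rr n)) v \<bullet> eta (rr n)) \<longlonglongrightarrow> g' xbar v \<bullet> \<eta>"
      by (rule tendsto_inner[OF A2 el])
    have eq: "g' (x k) v \<bullet> eta k = (1 / ss k) * (v \<bullet> xs k)" for k
    proof -
      have lin: "linear (blinfun_apply (g' (x k)))" by (simp add: blinfun.bounded_linear_right bounded_linear.linear)
      show ?thesis using adjoint_works[OF lin, of v "lam k"] by (simp add: eta_def xs_eq)
    qed
    have "(\<lambda>k. (1 / ss k) * (v \<bullet> xs k)) \<longlonglongrightarrow> 0 * (v \<bullet> xstar)"
      by (intro tendsto_intros inv_ss_lim xslim)
    then have "(\<lambda>k. (1 / ss k) * (v \<bullet> xs k)) \<longlonglongrightarrow> 0" by simp
    from LIMSEQ_subseq_LIMSEQ[OF this rr]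
    have "((\<lambda>k. (1 / ss k) * (v \<bullet> xs k)) \<circ> rr) \<longlonglongrightarrow> 0" .
    moreover have "(\<lambda>n. g' (x (rr n)) v \<bullet> eta (rr n)) = (\<lambda>k. (1 / ss k) * (v \<bullet> xs k)) \<circ> rr"
      by (rule ext) (simp only: eq o_def)
    ultimately have "(\<lambda>n. g' (x (rr n)) v \<bullet> eta (rr n)) \<longlonglongrightarrow> 0" by simp
    then show ?thesis using l1 LIMSEQ_unique by blast
  qed
  define a where "a = adjoint (blinfun_apply (g' xbar)) \<eta>"
  have "a \<bullet> a = g' xbar a \<bullet> \<eta>" unfolding a_def by (rule adjoint_works[OF lin0])
  then have "a \<bullet> a = 0" using zero by simp
  then show "adjoint (blinfun_apply (g' xbar)) \<eta> = 0" by (simp add: a_def)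
  have "(\<lambda>n. norm (eta (rr n))) \<longlonglongrightarrow> norm \<eta>" by (intro tendsto_intros el)
  moreover have "eventually (\<lambda>n. norm (eta (rr n)) = 1) sequentially"
    using eventually_subseq[OF rr eta_norm_ev] .
  ultimately have "(\<lambda>n. 1::real) \<longlonglongrightarrow> norm \<eta>" by (rule Lim_transform_eventually)
  then show "norm \<eta> = 1" using LIMSEQ_unique[OF tendsto_const] by metis
qed

lemma q_lim: "(\<lambda>k. norm (g' (x k) - g' xbar - g'' xbar (x k - xbar)) / tt k) \<longlonglongrightarrow> 0"
  using deriv_seq[OF d2 xlim xne] by (simp add: tt_def[abs_def])

lemma g'_rate: "eventually (\<lambda>k. norm (g' (x k) - g' xbar) \<le> (norm (g'' xbar) + 1) * tt k) sequentially"
proof -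
  have "eventually (\<lambda>k. norm (g' (x k) - g' xbar - g'' xbar (x k - xbar)) / tt k < 1) sequentially"
    using order_tendstoD(2)[OF q_lim, of 1] by simp
  then show ?thesis
  proof (rule eventually_mono)
    fix k assume h: "norm (g' (x k) - g' xbar - g'' xbar (x k - xbar)) / tt k < 1"
    have t: "tt k > 0" by (rule tt_pos)
    then have h2: "norm (g' (x k) - g' xbar - g'' xbar (x k - xbar)) \<le> tt k" using h by (simp add: field_simps)
    have h3: "norm (g'' xbar (x k - xbar)) \<le> norm (g'' xbar) * tt k"
      using norm_blinfun[of "g'' xbar" "x k - xbar"] by (simp add: tt_def)
    have "norm (g' (x k) - g' xbar) \<le> norm (g' (x k) - g' xbar - g'' xbar (x k - xbar)) + norm (g'' xbar (x k - xbar))"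
    proof -
      have "g' (x k) - g' xbar = (g' (x k) - g' xbar - g'' xbar (x k - xbar)) + g'' xbar (x k - xbar)" by simp
      then show ?thesis by (metis norm_triangle_ineq)
    qed
    also have "\<dots> \<le> tt k + norm (g'' xbar) * tt k" using h2 h3 by linarith
    finally show "norm (g' (x k) - g' xbar) \<le> (norm (g'' xbar) + 1) * tt k" by (simp add: algebra_simps)
  qed
qed

lemma adj_lim: "(\<lambda>k. adjoint (blinfun_apply (g' (x k))) l) \<longlonglongrightarrow> adjoint (blinfun_apply (g' xbar)) l"
proof -
  have "(\<lambda>k. norm (g' (x k) - g' xbar) * norm l) \<longlonglongrightarrow> norm (g' xbar - g' xbar) * norm l"
    by (intro tendsto_intros g'_lim)
  then have L: "(\<lambda>k. norm (g' (x k) - g' xbar) * norm l) \<longlonglongrightarrow> 0" by simp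
  have "(\<lambda>k. adjoint (blinfun_apply (g' (x k))) l - adjoint (blinfun_apply (g' xbar)) l) \<longlonglongrightarrow> 0"
    by (rule Lim_null_comparison[OF always_eventually L]) (simp add: adj_bound)
  then show ?thesis by (simp add: LIM_zero_iff)
qed

lemma Blam_lim:
  assumes ts0: "(\<lambda>k. tt k * ss k) \<longlonglongrightarrow> 0"
  shows "(\<lambda>k. adjoint (blinfun_apply (g' xbar)) (lam k)) \<longlonglongrightarrow> xstar"
proof -
  have L: "(\<lambda>k. (norm (g'' xbar) + 1) * (tt k * ss k)) \<longlonglongrightarrow> 0"
    using tendsto_mult_right_zero[OF ts0] by simp
  have "(\<lambda>k. adjoint (blinfun_apply (g' xbar)) (lam k) - xs k) \<longlonglongrightarrow> 0"
  proof (rule Lim_null_comparison[OF _ L])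
    show "eventually (\<lambda>k. norm (adjoint (blinfun_apply (g' xbar)) (lam k) - xs k) \<le> (norm (g'' xbar) + 1) * (tt k * ss k)) sequentially"
      using g'_rate
    proof (rule eventually_mono)
      fix k assume h: "norm (g' (x k) - g' xbar) \<le> (norm (g'' xbar) + 1) * tt k"
      have "norm (adjoint (blinfun_apply (g' xbar)) (lam k) - xs k) = norm (adjoint (blinfun_apply (g' (x k))) (lam k) - adjoint (blinfun_apply (g' xbar)) (lam k))"
        by (simp add: xs_eq norm_minus_commute)
      also have "\<dots> \<le> norm (g' (x k) - g' xbar) * norm (lam k)" by (rule adj_bound)
      also have "\<dots> \<le> ((norm (g'' xbar) + 1) * tt k) * ss k" using h by (simp add: ss_def mult_right_mono)
      finally show "norm (adjoint (blinfun_apply (g' xbar)) (lam k) - xs k) \<le> (norm (g'' xbar) + 1) * (tt k * ss k)"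
        by (simp add: mult.assoc)
    qed
  qed
  then have "(\<lambda>k. (adjoint (blinfun_apply (g' xbar)) (lam k) - xs k) + xs k) \<longlonglongrightarrow> 0 + xstar"
    by (rule tendsto_add[OF _ xslim])
  then show ?thesis by simp
qed

lemma caseA:
  assumes r: "r > 0" and finF: "finite F" and finC: "\<And>P. P \<in> F \<Longrightarrow> finite (C P)"
    and Prep: "\<And>P. P \<in> F \<Longrightarrow> P = {x. \<forall>c\<in>C P. fst c \<bullet> x \<le> snd c}"
    and Dloc: "D \<inter> cbox (g xbar - r *\<^sub>R One) (g xbar + r *\<^sub>R One) = \<Union>F"
    and ts0: "(\<lambda>k. tt k * ss k) \<longlonglongrightarrow> 0"
  shows "\<exists>l. (xstar, - l) \<in> dir_lim_normal {(x,y). g x - y \<in> D} (xbar, 0) (u, 0)"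
proof -
  have lin0: "linear (blinfun_apply (g' xbar))" by (simp add: blinfun.bounded_linear_right bounded_linear.linear)
  have linB: "linear (adjoint (blinfun_apply (g' xbar)))" by (rule adjoint_linear[OF lin0])
  obtain l and rr :: "nat \<Rightarrow> nat" where rr: "strict_mono rr" and lN: "\<forall>n. l \<in> reg_normal D (dk (rr n))"
    and Bl: "adjoint (blinfun_apply (g' xbar)) l = xstar"
    using P2[OF r finF finC Prep Dloc, of dk lam "adjoint (blinfun_apply (g' xbar))" xstar]
      dkD dk_lim lamN linB Blam_lim[OF ts0] by blast
  show ?thesis
  proof (rule exI[of _ l])
    show "(xstar, - l) \<in> dir_lim_normal {(x,y). g x - y \<in> D} (xbar, 0) (u, 0)"
      unfolding dir_lim_normal_def
    proof (rule CollectI, rule exI[of _ "\<lambda>n. tt (rr n)"], rule exI[of _ "\<lambda>n. (uu (rr n), (1 / tt (rr n)) *\<^sub>R y (rr n))"],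
        rule exI[of _ "\<lambda>n. (adjoint (blinfun_apply (g' (x (rr n)))) l, - l)"], intro conjI allI)
      show "0 < tt (rr k)" for k by (rule tt_pos)
      show "(\<lambda>n. tt (rr n)) \<longlonglongrightarrow> 0" using LIMSEQ_subseq_LIMSEQ[OF tt_lim rr] by (simp add: o_def)
      have U: "(\<lambda>n. uu (rr n)) \<longlonglongrightarrow> u" using LIMSEQ_subseq_LIMSEQ[OF uu_lim rr] by (simp add: o_def)
      have Y: "(\<lambda>n. (1 / tt (rr n)) *\<^sub>R y (rr n)) \<longlonglongrightarrow> 0"
        using LIMSEQ_subseq_LIMSEQ[OF ytl rr] by (simp add: o_def tt_def)
      show "(\<lambda>n. (uu (rr n), (1 / tt (rr n)) *\<^sub>R y (rr n))) \<longlonglongrightarrow> (u, 0)"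
        by (rule tendsto_Pair[OF U Y])
      have A: "(\<lambda>n. adjoint (blinfun_apply (g' (x (rr n)))) l) \<longlonglongrightarrow> xstar"
        using LIMSEQ_subseq_LIMSEQ[OF adj_lim[of l] rr] Bl by (simp add: o_def)
      show "(\<lambda>n. (adjoint (blinfun_apply (g' (x (rr n)))) l, - l)) \<longlonglongrightarrow> (xstar, - l)"
        by (rule tendsto_Pair[OF A tendsto_const])
      fix k
      have eq: "(xbar, 0) + tt (rr k) *\<^sub>R (uu (rr k), (1 / tt (rr k)) *\<^sub>R y (rr k)) = (x (rr k), y (rr k))"
        using tt_pos[of "rr k"] by (simp add: uu_def)
      have "l \<in> reg_normal D (g (x (rr k)) - y (rr k))" using lN by (simp add: dk_def)
      from gn_conv[OF this d1]
      show "(adjoint (blinfun_apply (g' (x (rr k)))) l, - l) \<in> reg_normal {(x,y). g x - y \<in> D}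
          ((xbar, 0) + tt (rr k) *\<^sub>R (uu (rr k), (1 / tt (rr k)) *\<^sub>R y (rr k)))"
        unfolding eq .
    qed
  qed
qed

lemma lamy_ev: "eventually (\<lambda>k. lam k \<bullet> y k \<ge> 0) sequentially"
proof -
  define a where "a k = (1 / norm (y k)) *\<^sub>R y k" for k
  have na: "norm (a k) = 1" for k using yne[of k] by (simp add: a_def)
  have al: "(\<lambda>k. a k - eta k) \<longlonglongrightarrow> 0" using align by (simp add: a_def[abs_def] eta_def[abs_def] ss_def[abs_def])
  then have "(\<lambda>k. norm (a k - eta k)) \<longlonglongrightarrow> 0" by (simp add: tendsto_norm_zero_iff)
  then have "(\<lambda>k. 1 - (norm (a k - eta k))^2 / 2) \<longlonglongrightarrow> 1 - 0^2/2"
    by (intro tendsto_intros) auto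
  then have L1: "(\<lambda>k. 1 - (norm (a k - eta k))^2 / 2) \<longlonglongrightarrow> 1" by simp
  have "eventually (\<lambda>k. 1 - (norm (a k - eta k))^2 / 2 = eta k \<bullet> a k) sequentially"
    using eta_norm_ev
  proof (rule eventually_mono)
    fix k assume ne: "norm (eta k) = 1"
    have "(norm (a k - eta k))^2 = (norm (a k))^2 - 2 * (eta k \<bullet> a k) + (norm (eta k))^2"
      by (simp add: power2_norm_eq_inner inner_diff_left inner_diff_right inner_commute)
    then show "1 - (norm (a k - eta k))^2 / 2 = eta k \<bullet> a k" using ne na[of k] by (simp add: field_simps)
  qed
  from Lim_transform_eventually[OF L1 this]
  have L2: "(\<lambda>k. eta k \<bullet> a k) \<longlonglongrightarrow> 1" .
  have "eventually (\<lambda>k. eta k \<bullet> a k > 0) sequentially"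
    using order_tendstoD(1)[OF L2, of 0] by simp
  then show ?thesis using ss_ev
  proof (eventually_elim)
    case (elim k)
    have "lam k = ss k *\<^sub>R eta k" using elim(2) by (simp add: eta_def)
    moreover have "y k = norm (y k) *\<^sub>R a k" using yne[of k] by (simp add: a_def)
    ultimately have "lam k \<bullet> y k = (ss k * norm (y k)) * (eta k \<bullet> a k)"
      by (metis inner_scaleR_left inner_scaleR_right mult.assoc)
    moreover have "ss k * norm (y k) \<ge> 0" using elim(2) by simp
    ultimately show ?case using elim(1) by simp
  qed
qed

definition "rm k = g (x k) - g xbar - g' (x k) (x k - xbar) + (1/2) *\<^sub>R (g'' xbar (x k - xbar) (x k - xbar))"
definition "qq k = g' (x k) - g' xbar - g'' xbar (x k - xbar)"

lemma rm_lim: "(\<lambda>k. norm (rm k) / (tt k)^2) \<longlonglongrightarrow> 0"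
  unfolding LIMSEQ_iff
proof (intro allI impI)
  fix e :: real assume e: "e > 0"
  obtain \<delta> where \<delta>: "\<delta> > 0" and H: "\<forall>z. norm (z - xbar) < \<delta> \<longrightarrow>
      norm (g z - g xbar - g' z (z - xbar) + (1/2) *\<^sub>R (g'' xbar (z - xbar) (z - xbar))) \<le> (e/2) * (norm (z - xbar))^2"
    using taylor2[OF d1 d2 c2, of "e/2" xbar] e by auto
  obtain N where N: "\<forall>n\<ge>N. norm (x n - xbar) < \<delta>" using LIMSEQ_D[OF xlim \<delta>] by blast
  show "\<exists>no. \<forall>n\<ge>no. norm (norm (rm n) / (tt n)^2 - 0) < e"
  proof (intro exI[of _ N] allI impI)
    fix n assume "n \<ge> N"
    then have "norm (rm n) \<le> (e/2) * (tt n)^2" using H N by (simp add: rm_def tt_def)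
    moreover have "tt n > 0" by (rule tt_pos)
    ultimately have h: "norm (rm n) / (tt n)^2 \<le> e/2" by (simp add: field_simps)
    have "norm (norm (rm n) / (tt n)^2 - 0) = norm (rm n) / (tt n)^2" by simp
    then show "norm (norm (rm n) / (tt n)^2 - 0) < e" using e h by linarith
  qed
qed

lemma qq_lim: "(\<lambda>k. norm (qq k) / tt k) \<longlonglongrightarrow> 0"
  using q_lim by (simp add: qq_def[abs_def])

lemma ident:
  assumes lw: "lam k \<bullet> ww k = 0" and lw0: "lam k \<bullet> g' xbar u = 0" and sp: "ss k > 0"
  shows "(lam k \<bullet> y k) / ((tt k)^2 * ss k) =
     (xs k \<bullet> (uu k - u)) / (tt k * ss k) + eta k \<bullet> (g'' xbar (uu k) u) + (eta k \<bullet> qq k u) / tt k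
     - (1/2) * (eta k \<bullet> g'' xbar (uu k) (uu k)) + (eta k \<bullet> rm k) / (tt k)^2"
proof -
  define t where "t = tt k"
  define s where "s = ss k"
  define L where "L = lam k"
  define e where "e = eta k"
  define X where "X = xs k"
  define U where "U = uu k"
  define h where "h = x k - xbar"
  have tp: "t > 0" using tt_pos by (simp add: t_def)
  have sp': "s > 0" using sp by (simp add: s_def)
  have hU: "h = t *\<^sub>R U" using tp by (simp add: h_def t_def U_def uu_def)
  have Le: "L = s *\<^sub>R e" using sp' by (simp add: L_def s_def e_def eta_def)
  have a1: "L \<bullet> y k = L \<bullet> (g (x k) - g xbar)"
  proof -
    have "L \<bullet> (dk k - g xbar) = t * (L \<bullet> ww k)" using dk_eq[of k] by (simp add: t_def)
    then have "L \<bullet> (dk k - g xbar) = 0" using lw by (simp add: L_def)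
    then show ?thesis by (simp add: dk_def inner_diff_right)
  qed
  have a2: "g (x k) - g xbar = g' (x k) h - (1/2) *\<^sub>R (g'' xbar h h) + rm k"
    by (simp add: rm_def h_def)
  have linx: "linear (blinfun_apply (g' (x k)))" by (simp add: blinfun.bounded_linear_right bounded_linear.linear)
  have a3: "L \<bullet> g' (x k) h = t * (X \<bullet> (U - u)) + t * (X \<bullet> u)"
  proof -
    have "L \<bullet> g' (x k) h = h \<bullet> X" using adjoint_works[OF linx, of h L] by (simp add: X_def xs_eq L_def inner_commute)
    also have "\<dots> = t * (X \<bullet> U)" by (simp add: hU inner_commute)
    also have "\<dots> = t * (X \<bullet> (U - u)) + t * (X \<bullet> u)" by (simp add: inner_diff_right algebra_simps)
    finally show ?thesis .
  qed
  have a4: "X \<bullet> u = t * (L \<bullet> g'' xbar U u) + L \<bullet> qq k u"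
  proof -
    have "X \<bullet> u = g' (x k) u \<bullet> L" using adjoint_works[OF linx, of u L] by (simp add: X_def xs_eq L_def inner_commute)
    also have "g' (x k) u = g' xbar u + g'' xbar h u + qq k u"
      by (simp add: qq_def h_def blinfun.diff_left)
    also have "(g' xbar u + g'' xbar h u + qq k u) \<bullet> L = L \<bullet> g' xbar u + L \<bullet> g'' xbar h u + L \<bullet> qq k u"
      by (simp add: inner_add_left inner_add_right inner_commute)
    also have "L \<bullet> g' xbar u = 0" using lw0 by (simp add: L_def)
    also have "L \<bullet> g'' xbar h u = t * (L \<bullet> g'' xbar U u)"
      by (simp add: hU blinfun.scaleR_right blinfun.scaleR_left)
    finally show ?thesis by simp
  qed
  have a5: "L \<bullet> g'' xbar h h = t * t * (L \<bullet> g'' xbar U U)"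
    by (simp add: hU blinfun.scaleR_right blinfun.scaleR_left)
  have main: "L \<bullet> y k = t * (X \<bullet> (U - u)) + t * t * s * (e \<bullet> g'' xbar U u) + t * s * (e \<bullet> qq k u)
      - (1/2) * (t * t * s) * (e \<bullet> g'' xbar U U) + s * (e \<bullet> rm k)"
  proof -
    have "L \<bullet> y k = L \<bullet> g' (x k) h - (1/2) * (L \<bullet> g'' xbar h h) + L \<bullet> rm k"
      unfolding a1 a2 by (simp add: inner_add_right inner_diff_right)
    also have "\<dots> = t * (X \<bullet> (U - u)) + t * (t * (L \<bullet> g'' xbar U u) + L \<bullet> qq k u)
        - (1/2) * (t * t * (L \<bullet> g'' xbar U U)) + L \<bullet> rm k"
      unfolding a3 a4 a5 by simp
    also have "\<dots> = t * (X \<bullet> (U - u)) + t * t * s * (e \<bullet> g'' xbar U u) + t * s * (e \<bullet> qq k u)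
      - (1/2) * (t * t * s) * (e \<bullet> g'' xbar U U) + s * (e \<bullet> rm k)"
      by (simp add: Le algebra_simps)
    finally show ?thesis .
  qed
  show ?thesis
    unfolding t_def[symmetric] s_def[symmetric] L_def[symmetric] e_def[symmetric] X_def[symmetric] U_def[symmetric] main
    using tp sp' by (simp add: field_simps power2_eq_square)
qed

lemma caseB:
  assumes r: "r > 0" and finF: "finite F" and finC: "\<And>P. P \<in> F \<Longrightarrow> finite (C P)"
    and Prep: "\<And>P. P \<in> F \<Longrightarrow> P = {x. \<forall>c\<in>C P. fst c \<bullet> x \<le> snd c}"
    and Dloc: "D \<inter> cbox (g xbar - r *\<^sub>R One) (g xbar + r *\<^sub>R One) = \<Union>F"
    and rr: "strict_mono rr" and el: "(\<lambda>n. eta (rr n)) \<longlonglongrightarrow> \<eta>"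
    and ep: "\<epsilon> > 0" and big: "\<And>n. \<epsilon> \<le> tt (rr n) * ss (rr n)"
  shows "\<eta> \<bullet> g'' xbar u u \<ge> 0"
proof -
  have ev1: "eventually (\<lambda>k. lam k \<bullet> ww k = 0 \<and> lam k \<bullet> g' xbar u = 0) sequentially"
    by (rule P1[OF r finF finC Prep Dloc dkD dk_eq tt_pos tt_lim ww_lim lamN])
  define E where "E k = (lam k \<bullet> y k) / ((tt k)^2 * ss k)" for k
  define T1 where "T1 k = (xs k \<bullet> (uu k - u)) / (tt k * ss k)" for k
  define T2 where "T2 k = eta k \<bullet> (g'' xbar (uu k) u)" for k
  define T3 where "T3 k = (eta k \<bullet> qq k u) / tt k" for k
  define T4 where "T4 k = (1/2) * (eta k \<bullet> g'' xbar (uu k) (uu k))" for k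
  define T5 where "T5 k = (eta k \<bullet> rm k) / (tt k)^2" for k
  have evI: "eventually (\<lambda>k. T1 k + T2 k + T3 k - T4 k + T5 k = E k) sequentially"
    using ev1 ss_ev
  proof (eventually_elim)
    case (elim k)
    show ?case using ident[of k] elim by (simp add: E_def T1_def T2_def T3_def T4_def T5_def)
  qed
  have evP: "eventually (\<lambda>k. E k \<ge> 0) sequentially"
    using lamy_ev ss_ev
  proof (eventually_elim)
    case (elim k)
    have "(tt k)^2 * ss k > 0" using tt_pos[of k] elim(2) by simp
    then show ?case using elim(1) by (simp add: E_def)
  qed
  have U: "(\<lambda>n. uu (rr n)) \<longlonglongrightarrow> u" using LIMSEQ_subseq_LIMSEQ[OF uu_lim rr] by (simp add: o_def)
  have X: "(\<lambda>n. xs (rr n)) \<longlonglongrightarrow> xstar" using LIMSEQ_subseq_LIMSEQ[OF xslim rr] by (simp add: o_def)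
  have GU: "(\<lambda>n. g'' xbar (uu (rr n))) \<longlonglongrightarrow> g'' xbar u"
    by (rule bounded_linear.tendsto[OF blinfun.bounded_linear_right U])
  have L1: "(\<lambda>n. T1 (rr n)) \<longlonglongrightarrow> 0"
  proof (rule Lim_null_comparison)
    show "eventually (\<lambda>n. norm (T1 (rr n)) \<le> norm (xs (rr n)) * norm (uu (rr n) - u) / \<epsilon>) sequentially"
    proof (rule always_eventually, rule allI)
      fix n
      have p: "tt (rr n) * ss (rr n) \<ge> \<epsilon>" by (rule big)
      have "norm (T1 (rr n)) = \<bar>xs (rr n) \<bullet> (uu (rr n) - u)\<bar> / (tt (rr n) * ss (rr n))"
        using p ep by (simp add: T1_def)
      also have "\<dots> \<le> (norm (xs (rr n)) * norm (uu (rr n) - u)) / (tt (rr n) * ss (rr n))"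
        using p ep by (intro divide_right_mono Cauchy_Schwarz_ineq2) auto
      also have "\<dots> \<le> (norm (xs (rr n)) * norm (uu (rr n) - u)) / \<epsilon>"
        using p ep by (intro divide_left_mono) auto
      finally show "norm (T1 (rr n)) \<le> norm (xs (rr n)) * norm (uu (rr n) - u) / \<epsilon>" .
    qed
    have "(\<lambda>n. uu (rr n) - u) \<longlonglongrightarrow> 0" using U by (simp add: LIM_zero_iff)
    then have "(\<lambda>n. norm (uu (rr n) - u)) \<longlonglongrightarrow> 0" by (simp add: tendsto_norm_zero_iff)
    then have "(\<lambda>n. norm (xs (rr n)) * norm (uu (rr n) - u) / \<epsilon>) \<longlonglongrightarrow> norm xstar * 0 / \<epsilon>"
      by (intro tendsto_divide tendsto_mult tendsto_norm X tendsto_const) (use ep in auto)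
    then show "(\<lambda>n. norm (xs (rr n)) * norm (uu (rr n) - u) / \<epsilon>) \<longlonglongrightarrow> 0" by simp
  qed
  have L2: "(\<lambda>n. T2 (rr n)) \<longlonglongrightarrow> \<eta> \<bullet> g'' xbar u u"
  proof -
    have "(\<lambda>n. g'' xbar (uu (rr n)) u) \<longlonglongrightarrow> g'' xbar u u"
      by (rule bounded_bilinear.tendsto[OF bounded_bilinear_blinfun_apply GU tendsto_const])
    from tendsto_inner[OF el this] show ?thesis by (simp add: T2_def)
  qed
  have L4: "(\<lambda>n. T4 (rr n)) \<longlonglongrightarrow> (1/2) * (\<eta> \<bullet> g'' xbar u u)"
  proof -
    have "(\<lambda>n. g'' xbar (uu (rr n)) (uu (rr n))) \<longlonglongrightarrow> g'' xbar u u"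
      by (rule bounded_bilinear.tendsto[OF bounded_bilinear_blinfun_apply GU U])
    from tendsto_mult[OF tendsto_const tendsto_inner[OF el this], of "1/2"] show ?thesis by (simp add: T4_def)
  qed
  have L3w: "T3 \<longlonglongrightarrow> 0"
  proof (rule Lim_null_comparison)
    show "eventually (\<lambda>k. norm (T3 k) \<le> norm (qq k) / tt k * norm u) sequentially"
    proof (rule always_eventually, rule allI)
      fix k
      have tp: "tt k > 0" by (rule tt_pos)
      have "\<bar>eta k \<bullet> qq k u\<bar> \<le> norm (eta k) * norm (qq k u)" by (rule Cauchy_Schwarz_ineq2)
      also have "\<dots> \<le> 1 * norm (qq k u)" using eta_ball by (intro mult_right_mono) auto
      also have "\<dots> \<le> norm (qq k) * norm u" by (simp add: norm_blinfun)
      finally have "\<bar>eta k \<bullet> qq k u\<bar> / tt k \<le> norm (qq k) * norm u / tt k"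
        using tp by (intro divide_right_mono) auto
      then show "norm (T3 k) \<le> norm (qq k) / tt k * norm u" using tp by (simp add: T3_def)
    qed
    show "(\<lambda>k. norm (qq k) / tt k * norm u) \<longlonglongrightarrow> 0"
      using tendsto_mult[OF qq_lim tendsto_const, of "norm u"] by simp
  qed
  have L3: "(\<lambda>n. T3 (rr n)) \<longlonglongrightarrow> 0" using LIMSEQ_subseq_LIMSEQ[OF L3w rr] by (simp add: o_def)
  have L5w: "T5 \<longlonglongrightarrow> 0"
  proof (rule Lim_null_comparison[OF _ rm_lim])
    show "eventually (\<lambda>k. norm (T5 k) \<le> norm (rm k) / (tt k)^2) sequentially"
    proof (rule always_eventually, rule allI)
      fix k
      have tp: "(tt k)^2 > 0" using tt_pos[of k] by simp
      have "\<bar>eta k \<bullet> rm k\<bar> \<le> norm (eta k) * norm (rm k)" by (rule Cauchy_Schwarz_ineq2)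
      also have "\<dots> \<le> 1 * norm (rm k)" using eta_ball by (intro mult_right_mono) auto
      finally have "\<bar>eta k \<bullet> rm k\<bar> / (tt k)^2 \<le> norm (rm k) / (tt k)^2"
        using tp by (intro divide_right_mono) auto
      then show "norm (T5 k) \<le> norm (rm k) / (tt k)^2" using tp by (simp add: T5_def)
    qed
  qed
  have L5: "(\<lambda>n. T5 (rr n)) \<longlonglongrightarrow> 0" using LIMSEQ_subseq_LIMSEQ[OF L5w rr] by (simp add: o_def)
  have LS: "(\<lambda>n. T1 (rr n) + T2 (rr n) + T3 (rr n) - T4 (rr n) + T5 (rr n)) \<longlonglongrightarrow>
      0 + \<eta> \<bullet> g'' xbar u u + 0 - (1/2) * (\<eta> \<bullet> g'' xbar u u) + 0"
    by (intro tendsto_add tendsto_diff L1 L2 L3 L4 L5)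
  have LE: "(\<lambda>n. E (rr n)) \<longlonglongrightarrow> (1/2) * (\<eta> \<bullet> g'' xbar u u)"
  proof -
    have "eventually (\<lambda>n. T1 (rr n) + T2 (rr n) + T3 (rr n) - T4 (rr n) + T5 (rr n) = E (rr n)) sequentially"
      using eventually_subseq[OF rr evI] .
    from Lim_transform_eventually[OF LS this] show ?thesis by simp
  qed
  have "eventually (\<lambda>n. E (rr n) \<ge> 0) sequentially" using eventually_subseq[OF rr evP] .
  then obtain N where "\<forall>n\<ge>N. 0 \<le> E (rr n)" unfolding eventually_sequentially by blast
  then have "0 \<le> (1/2) * (\<eta> \<bullet> g'' xbar u u)" using LIMSEQ_le_const[OF LE] by blast
  then show ?thesis by simp
qed

lemma final:
  assumes cond: "FOSCMS g g' D xbar u \<or> (locally_polyhedral D (g xbar) \<and> SOSCMS g g' g'' D xbar u)"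
  shows "\<exists>l. (xstar, - l) \<in> dir_lim_normal {(x,y). g x - y \<in> D} (xbar, 0) (u, 0)"
proof -
  have ball: "eta k \<in> cball 0 1" for k using eta_ball[of k] by simp
  have sub: "\<exists>rr2 \<eta>. strict_mono (rr2 :: nat \<Rightarrow> nat) \<and> (\<lambda>n. eta (rr1 (rr2 n))) \<longlonglongrightarrow> \<eta>" for rr1 :: "nat \<Rightarrow> nat"
  proof -
    obtain l r where "l \<in> cball 0 1" "strict_mono (r :: nat \<Rightarrow> nat)" "((\<lambda>n. eta (rr1 n)) \<circ> r) \<longlonglongrightarrow> l"
      using seq_compactE[OF compact_imp_seq_compact[OF compact_cball], of "\<lambda>n. eta (rr1 n)" 0 1] ball by metis
    then show ?thesis by (auto simp: o_def)
  qed
  show ?thesis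
  proof (cases "FOSCMS g g' D xbar u")
    case True
    obtain rr2 \<eta> where rr: "strict_mono (rr2 :: nat \<Rightarrow> nat)" and el: "(\<lambda>n. eta (id (rr2 n))) \<longlonglongrightarrow> \<eta>"
      using sub[of id] by blast
    have el': "(\<lambda>n. eta (rr2 n)) \<longlonglongrightarrow> \<eta>" using el by simp
    have "\<eta> = 0" using True limdir(1,2)[OF rr el'] unfolding FOSCMS_def by simp
    then show ?thesis using limdir(3)[OF rr el'] by simp
  next
    case False
    then have LP: "locally_polyhedral D (g xbar)" and SO: "SOSCMS g g' g'' D xbar u" using cond by auto
    obtain r F where r: "r > 0" and finF: "finite F" and polyF: "\<forall>P\<in>F. polyhedron P"
      and Dloc: "D \<inter> cbox (g xbar - r *\<^sub>R One) (g xbar + r *\<^sub>R One) = \<Union>F"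
      using LP unfolding locally_polyhedral_def by blast
    have "\<forall>P\<in>F. \<exists>C. finite C \<and> P = {x. \<forall>c\<in>C. fst c \<bullet> x \<le> snd c}"
      using polyF polyrep by blast
    then obtain C where C: "\<And>P. P \<in> F \<Longrightarrow> finite (C P) \<and> P = {x. \<forall>c\<in>C P. fst c \<bullet> x \<le> snd c}"
      by (rule bchoice[elim_format]) blast
    have finC: "\<And>P. P \<in> F \<Longrightarrow> finite (C P)" using C by blast
    have Prep: "\<And>P. P \<in> F \<Longrightarrow> P = {x. \<forall>c\<in>C P. fst c \<bullet> x \<le> snd c}" using C by blast
    show ?thesis
    proof (cases "(\<lambda>k. tt k * ss k) \<longlonglongrightarrow> 0")
      case True
      show ?thesis by (rule caseA[OF r finF finC Prep Dloc True])
    next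
      case False
      then obtain \<epsilon> where ep: "\<epsilon> > 0" and unb: "\<forall>no. \<exists>n\<ge>no. \<not> norm (tt n * ss n - 0) < \<epsilon>"
        unfolding LIMSEQ_iff by blast
      define K where "K = {k. \<epsilon> \<le> tt k * ss k}"
      have nn: "norm (tt n * ss n - 0) = tt n * ss n" for n
        using tt_pos[of n] by (simp add: ss_def)
      have infK: "infinite K" unfolding infinite_nat_iff_unbounded_le K_def
      proof
        fix m
        obtain n where "n \<ge> m" "\<not> norm (tt n * ss n - 0) < \<epsilon>" using unb by blast
        then show "\<exists>n\<ge>m. n \<in> {k. \<epsilon> \<le> tt k * ss k}" using nn[of n] by auto
      qed
      define rr1 where "rr1 = enumerate K"
      have rr1: "strict_mono rr1" unfolding strict_mono_def rr1_def using enumerate_mono[OF _ infK] by blast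
      have rr1K: "rr1 n \<in> K" for n unfolding rr1_def using enumerate_in_set[OF infK] .
      obtain rr2 \<eta> where rr2: "strict_mono (rr2 :: nat \<Rightarrow> nat)" and el: "(\<lambda>n. eta (rr1 (rr2 n))) \<longlonglongrightarrow> \<eta>"
        using sub[of rr1] by blast
      define rr where "rr = rr1 \<circ> rr2"
      have rr: "strict_mono rr" unfolding rr_def using strict_mono_o[OF rr1 rr2] .
      have el': "(\<lambda>n. eta (rr n)) \<longlonglongrightarrow> \<eta>" using el by (simp add: rr_def)
      have big: "\<epsilon> \<le> tt (rr n) * ss (rr n)" for n using rr1K[of "rr2 n"] by (simp add: rr_def K_def)
      have pos: "\<eta> \<bullet> g'' xbar u u \<ge> 0" by (rule caseB[OF r finF finC Prep Dloc rr el' ep big])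
      have "\<eta> = 0" using SO limdir(1,2)[OF rr el'] pos unfolding SOSCMS_def by simp
      then show ?thesis using limdir(3)[OF rr el'] by simp
    qed
  qed
qed

end


lemma main_aux:
  fixes g :: "'a::euclidean_space \<Rightarrow> 'b::euclidean_space"
    and g' :: "'a \<Rightarrow> 'a \<Rightarrow>\<^sub>L 'b"
    and g'' :: "'a \<Rightarrow> 'a \<Rightarrow>\<^sub>L 'a \<Rightarrow>\<^sub>L 'b"
    and D :: "'b set" and xbar u :: 'a
    and x :: "nat \<Rightarrow> 'a" and y :: "nat \<Rightarrow> 'b" and xs :: "nat \<Rightarrow> 'a" and lam :: "nat \<Rightarrow> 'b" and xstar :: 'a
  assumes d1: "\<And>x. (g has_derivative blinfun_apply (g' x)) (at x)"
    and d2: "\<And>x. (g' has_derivative blinfun_apply (g'' x)) (at x)"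
    and c2: "continuous_on UNIV g''"
    and zD: "g xbar \<in> D"
    and cond: "FOSCMS g g' D xbar u \<or> (locally_polyhedral D (g xbar) \<and> SOSCMS g g' g'' D xbar u)"
    and a2: "\<forall>k. 0 \<notin> (\<lambda>x. {g x - d | d. d \<in> D}) (x k)"
    and a3: "\<forall>k. y k \<noteq> 0"
    and a4: "\<forall>k. xs k \<in> reg_coderiv (\<lambda>x. {g x - d | d. d \<in> D}) (x k) (y k) (lam k)"
    and xlim: "x \<longlonglongrightarrow> xbar" and ylim: "y \<longlonglongrightarrow> 0" and xslim: "xs \<longlonglongrightarrow> xstar"
    and ulim: "(\<lambda>k. (1 / norm (x k - xbar)) *\<^sub>R (x k - xbar)) \<longlonglongrightarrow> u"
    and ytl: "(\<lambda>k. (1 / norm (x k - xbar)) *\<^sub>R y k) \<longlonglongrightarrow> 0"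
    and slim: "filterlim (\<lambda>k. norm (lam k)) at_top sequentially"
    and align: "(\<lambda>k. (1 / norm (y k)) *\<^sub>R y k - (1 / norm (lam k)) *\<^sub>R lam k) \<longlonglongrightarrow> 0"
  shows "\<exists>l. (xstar, - l) \<in> dir_lim_normal (gph (\<lambda>x. {g x - d | d. d \<in> D})) (xbar, 0) (u, 0)"
proof -
  have G: "gph (\<lambda>x. {g x - d | d. d \<in> D}) = {(x,y). g x - y \<in> D}" by (rule gph_eq)
  have GR: "(xs k, - lam k) \<in> reg_normal {(x,y). g x - y \<in> D} (x k, y k)" for k
    using a4 unfolding reg_coderiv_def G by blast
  have xne: "x k \<noteq> xbar" for k
  proof
    assume "x k = xbar"
    then have "0 \<in> {g (x k) - d | d. d \<in> D}" using zD by (intro CollectI exI[of _ "g xbar"]) simp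
    then show False using a2 by blast
  qed
  have yne: "y k \<noteq> 0" for k using a3 by blast
  from final[OF d1 d2 c2 zD GR xne yne xlim ylim xslim ulim ytl slim align cond]
  show ?thesis unfolding G .
qed

theorem corollary5p23:
  fixes g :: "'a::euclidean_space \<Rightarrow> 'b::euclidean_space"
    and g' :: "'a \<Rightarrow> 'a \<Rightarrow>\<^sub>L 'b"
    and g'' :: "'a \<Rightarrow> 'a \<Rightarrow>\<^sub>L 'a \<Rightarrow>\<^sub>L 'b"
    and D :: "'b set" and xbar u :: 'a
  assumes d1: "\<And>x. (g has_derivative blinfun_apply (g' x)) (at x)"
    and d2: "\<And>x. (g' has_derivative blinfun_apply (g'' x)) (at x)"
    and c2: "continuous_on UNIV g''"
    and "closed D"
    and "(xbar, 0) \<in> gph (\<lambda>x. {g x - d | d. d \<in> D})"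
    and "norm u = 1"
    and "FOSCMS g g' D xbar u \<or>
         (locally_polyhedral D (g xbar) \<and> SOSCMS g g' g'' D xbar u)"
  shows "strongly_asymp_regular_dir (\<lambda>x. {g x - d | d. d \<in> D}) xbar u"
proof -
  have zD: "g xbar \<in> D" using assms(5) unfolding gph_eq by simp
  show ?thesis
    unfolding strongly_asymp_regular_dir_def
    apply (intro allI impI)
    apply (elim conjE)
    apply (rule main_aux[OF d1 d2 c2 zD assms(7)])
                apply assumption+
    done
qed

end
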